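(* Let $P=\mathbb{Q}[x_1,\dots,x_n]$, let $\sigma$ and $\tau$ be two term orderings on $\mathbb{T}^n$, and let $I$ be a non-zero ideal in $P$. Let $p$ and $q$ be primes which are $\sigma$-good for $I$. If $O_\tau(I_{(q,\sigma)})\prec_\tau O_\tau(I_{(p,\sigma)})$, then $q$ is $\tau$-bad for $I$.
   Context: $\mathbb{T}^n$ is the monoid of power-products in $x_1,\dots,x_n$. For $f\in P$, $\operatorname{den}(f)$ is the positive lcm of the denominators of its coefficients; $\operatorname{den}(G)$ is the lcm of $\operatorname{den}(g)$, $g\in G$. For a term ordering $\rho$ with $G_\rho$ the reduced $\rho$-Gröbner basis of $I$, a prime $p$ is $\rho$-good for $I$ if $p\nmid\operatorname{den}(G_\rho)$ and $\rho$-bad otherwise. For $\sigma$-good $p$, $\pi_p$ is coefficientwise reduction modulo $p$ into $\mathbb{F}_p[x_1,\dots,x_n]$ and $I_{(p,\sigma)}$ is the ideal of $\mathbb{F}_p[x_1,\dots,x_n]$ generated by $\pi_p(G_\sigma)$. A tuple $(t_1,\dots,t_r)$ of distinct power-products is $\tau$-ordered if $t_1<_\tau\cdots<_\tau t_r$. For an ideal $J$ in a polynomial ring over a field, $O_\tau(J)$ is the $\tau$-ordered tuple of the leading terms of a minimal $\tau$-Gröbner basis of $J$. For $\tau$-ordered tuples $T=(t_1,\dots,t_r)$ and $T'=(t'_1,\dots,t'_{r'})$, $T'\prec_\tau T$ means either $T$ is a proper prefix of $T'$ (i.e. $r<r'$ and $t_i=t'_i$ for $i\le r$), or there is $k\le\min(r,r')$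 with $t_i=t'_i$ for $i<k$ and $t'_k<_\tau t_k$. *)

theory Defs
  imports "HOL-Library.Poly_Mapping" "Berlekamp_Zassenhaus.Finite_Field"
begin

(* Power-products in the variables of a finite type 'v are finitely supported
  exponent vectors (written additively); polynomials with coefficients in 'k
  are finitely supported coefficient maps on power-products
  (multiplication = convolution from Poly_Mapping). *)

type_synonym 'v pp = "'v \<Rightarrow>\<^sub>0 nat"
type_synonym ('v, 'k) mpoly = "'v pp \<Rightarrow>\<^sub>0 'k"

definition term_order :: "('v pp \<Rightarrow> 'v pp \<Rightarrow> bool) \<Rightarrow> bool" where
  "term_order ord \<longleftrightarrow>
     (\<forall>s. ord s s) \<and>
     (\<forall>s t. ord s t \<and> ord t s \<longrightarrow> s = t) \<and>
     (\<forall>s t u. ord s t \<and> ord t u \<longrightarrow> ord s u) \<and>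
     (\<forall>s t. ord s t \<or> ord t s) \<and>
     (\<forall>t. ord 0 t) \<and>
     (\<forall>s t u. ord s t \<longrightarrow> ord (s + u) (t + u))"

definition strict_of :: "('v pp \<Rightarrow> 'v pp \<Rightarrow> bool) \<Rightarrow> 'v pp \<Rightarrow> 'v pp \<Rightarrow> bool" where
  "strict_of ord s t \<longleftrightarrow> ord s t \<and> s \<noteq> t"

definition pp_dvd :: "'v pp \<Rightarrow> 'v pp \<Rightarrow> bool" where
  "pp_dvd s t \<longleftrightarrow> (\<forall>v. Poly_Mapping.lookup s v \<le> Poly_Mapping.lookup t v)"

text \<open>Leading term and leading coefficient (for non-zero f).\<close>
definition lterm :: "('v pp \<Rightarrow> 'v pp \<Rightarrow> bool) \<Rightarrow> ('v, 'k::zero) mpoly \<Rightarrow> 'v pp" where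
  "lterm ord f = (THE t. t \<in> Poly_Mapping.keys f \<and> (\<forall>s\<in>Poly_Mapping.keys f. ord s t))"

definition lcoeff :: "('v pp \<Rightarrow> 'v pp \<Rightarrow> bool) \<Rightarrow> ('v, 'k::zero) mpoly \<Rightarrow> 'k" where
  "lcoeff ord f = Poly_Mapping.lookup f (lterm ord f)"

definition is_ideal :: "'a::comm_ring_1 set \<Rightarrow> bool" where
  "is_ideal J \<longleftrightarrow> 0 \<in> J \<and> (\<forall>f\<in>J. \<forall>g\<in>J. f + g \<in> J) \<and> (\<forall>f\<in>J. \<forall>h. h * f \<in> J)"

definition ideal_gen :: "'a::comm_ring_1 set \<Rightarrow> 'a set" where
  "ideal_gen G = \<Inter>{J. is_ideal J \<and> G \<subseteq> J}"

definition is_GB :: "('v pp \<Rightarrow> 'v pp \<Rightarrow> bool) \<Rightarrow> ('v, 'k::field) mpoly set \<Rightarrow> ('v, 'k) mpoly set \<Rightarrow> bool" where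
  "is_GB ord J G \<longleftrightarrow> finite G \<and> G \<subseteq> J \<and> 0 \<notin> G \<and>
     (\<forall>f\<in>J. f \<noteq> 0 \<longrightarrow> (\<exists>g\<in>G. pp_dvd (lterm ord g) (lterm ord f)))"

definition is_minimal_GB :: "('v pp \<Rightarrow> 'v pp \<Rightarrow> bool) \<Rightarrow> ('v, 'k::field) mpoly set \<Rightarrow> ('v, 'k) mpoly set \<Rightarrow> bool" where
  "is_minimal_GB ord J G \<longleftrightarrow> is_GB ord J G \<and>
     (\<forall>g\<in>G. lcoeff ord g = 1) \<and>
     (\<forall>g\<in>G. \<forall>g'\<in>G. g \<noteq> g' \<longrightarrow> \<not> pp_dvd (lterm ord g) (lterm ord g'))"

definition is_reduced_GB :: "('v pp \<Rightarrow> 'v pp \<Rightarrow> bool) \<Rightarrow> ('v, 'k::field) mpoly set \<Rightarrow> ('v, 'k) mpoly set \<Rightarrow> bool" where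
  "is_reduced_GB ord J G \<longleftrightarrow> is_GB ord J G \<and>
     (\<forall>g\<in>G. lcoeff ord g = 1) \<and>
     (\<forall>g\<in>G. \<forall>g'\<in>G. g \<noteq> g' \<longrightarrow> (\<forall>t\<in>Poly_Mapping.keys g'. \<not> pp_dvd (lterm ord g) t))"

text \<open>The (unique) reduced Groebner basis G_rho of J.\<close>
definition reduced_GB :: "('v pp \<Rightarrow> 'v pp \<Rightarrow> bool) \<Rightarrow> ('v, 'k::field) mpoly set \<Rightarrow> ('v, 'k) mpoly set" where
  "reduced_GB ord J = (THE G. is_reduced_GB ord J G)"

definition den_poly :: "('v, rat) mpoly \<Rightarrow> int" where
  "den_poly f = Lcm ((\<lambda>c. snd (quotient_of c)) ` Poly_Mapping.lookup f ` Poly_Mapping.keys f)"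

definition den_set :: "('v, rat) mpoly set \<Rightarrow> int" where
  "den_set G = Lcm (den_poly ` G)"

definition good :: "('v pp \<Rightarrow> 'v pp \<Rightarrow> bool) \<Rightarrow> ('v, rat) mpoly set \<Rightarrow> nat \<Rightarrow> bool" where
  "good ord I p \<longleftrightarrow> \<not> int p dvd den_set (reduced_GB ord I)"

text \<open>Reduction modulo p of a rational (with p not dividing the denominator)
  into F_p, represented as 'p mod_ring with CARD('p) = p.\<close>
definition rat_mod :: "rat \<Rightarrow> 'p::prime_card mod_ring" where
  "rat_mod r = (case quotient_of r of (a, b) \<Rightarrow> of_int a / of_int b)"

definition pi_mod :: "('v, rat) mpoly \<Rightarrow> ('v, 'p::prime_card mod_ring) mpoly" where
  "pi_mod f = Poly_Mapping.map rat_mod f"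

text \<open>I_(p,sigma): the ideal of F_p[x] generated by pi_p(G_sigma).\<close>
definition red_ideal :: "('v pp \<Rightarrow> 'v pp \<Rightarrow> bool) \<Rightarrow> ('v, rat) mpoly set \<Rightarrow> ('v, 'p::prime_card mod_ring) mpoly set" where
  "red_ideal ord I = ideal_gen (pi_mod ` reduced_GB ord I)"

text \<open>O_tau(J): tau-ordered tuple of leading terms of a minimal tau-Groebner basis.\<close>
definition O_tuple :: "('v pp \<Rightarrow> 'v pp \<Rightarrow> bool) \<Rightarrow> ('v, 'k::field) mpoly set \<Rightarrow> 'v pp list" where
  "O_tuple ord J = (SOME T. \<exists>G. is_minimal_GB ord J G \<and>
       sorted_wrt (strict_of ord) T \<and> set T = lterm ord ` G)"

text \<open>tuple_prec ord T' T  means  T' \<prec>_tau T.\<close>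
definition tuple_prec :: "('v pp \<Rightarrow> 'v pp \<Rightarrow> bool) \<Rightarrow> 'v pp list \<Rightarrow> 'v pp list \<Rightarrow> bool" where
  "tuple_prec ord T' T \<longleftrightarrow>
     (length T < length T' \<and> take (length T) T' = T) \<or>
     (\<exists>k < min (length T) (length T'). take k T = take k T' \<and> strict_of ord (T' ! k) (T ! k))"

end

theory Submission
  imports Defs
begin


lemma pp_dvd_refl: "pp_dvd s s" by (simp add: pp_dvd_def)
lemma pp_dvd_trans: "pp_dvd s t \<Longrightarrow> pp_dvd t u \<Longrightarrow> pp_dvd s u"
  unfolding pp_dvd_def using le_trans by blast
lemma pp_dvd_antisym: "pp_dvd s t \<Longrightarrow> pp_dvd t s \<Longrightarrow> s = t"
  unfolding pp_dvd_def by (intro poly_mapping_eqI) (simp add: le_antisym)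
lemma pp_dvd_add: "pp_dvd s (s + u)" by (simp add: pp_dvd_def lookup_add)
lemma pp_dvd_add': "pp_dvd s (u + s)" by (simp add: pp_dvd_def lookup_add)
lemma pp_dvd_decomp: "pp_dvd s t \<Longrightarrow> t = s + (t - s)"
  unfolding pp_dvd_def by (intro poly_mapping_eqI) (simp add: lookup_add lookup_minus)
lemma pp_dvd_cancel: "pp_dvd (u + s) (u + t) \<longleftrightarrow> pp_dvd s t"
  by (simp add: pp_dvd_def lookup_add)
lemma pp_dvd_mono_add: "pp_dvd s t \<Longrightarrow> pp_dvd (s + u) (t + u)"
  by (simp add: pp_dvd_def lookup_add)

lemma to_refl: "term_order ord \<Longrightarrow> ord s s" unfolding term_order_def by blast
lemma to_antisym: "term_order ord \<Longrightarrow> ord s t \<Longrightarrow> ord t s \<Longrightarrow> s = t"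
  unfolding term_order_def by blast
lemma to_trans: "term_order ord \<Longrightarrow> ord s t \<Longrightarrow> ord t u \<Longrightarrow> ord s u"
  unfolding term_order_def by blast
lemma to_total: "term_order ord \<Longrightarrow> ord s t \<or> ord t s"
  unfolding term_order_def by blast
lemma to_zero: "term_order ord \<Longrightarrow> ord 0 t"
  unfolding term_order_def by blast
lemma to_mono: "term_order ord \<Longrightarrow> ord s t \<Longrightarrow> ord (s + u) (t + u)"
  unfolding term_order_def by blast
lemma to_mono': "term_order ord \<Longrightarrow> ord s t \<Longrightarrow> ord (u + s) (u + t)"
  using to_mono[of ord s t u] by (simp add: add.commute)

lemma to_dvd: assumes "term_order ord" "pp_dvd s t" shows "ord s t"
proof -
  have "ord (0 + s) ((t - s) + s)" using to_mono[OF assms(1) to_zero[OF assms(1)]] by blast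
  then show ?thesis using pp_dvd_decomp[OF assms(2)] by (simp add: add.commute)
qed

lemma strict_irrefl: "\<not> strict_of ord s s" by (simp add: strict_of_def)
lemma strict_trans: assumes "term_order ord" "strict_of ord s t" "strict_of ord t u" shows "strict_of ord s u"
proof -
  have a: "ord s t" "s \<noteq> t" "ord t u" "t \<noteq> u" using assms(2,3) by (auto simp: strict_of_def)
  have "ord s u" using to_trans[OF assms(1) a(1) a(3)] .
  moreover have "s \<noteq> u" proof assume "s = u" then have "ord t s" using a by simp
    then show False using to_antisym[OF assms(1) a(1)] a(2) by blast qed
  ultimately show ?thesis by (simp add: strict_of_def)
qed
lemma strict_trans1: assumes "term_order ord" "ord s t" "strict_of ord t u" shows "strict_of ord s u"
proof -
  have a: "ord t u" "t \<noteq> u" using assms(3) by (auto simp: strict_of_def)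
  have "ord s u" using to_trans[OF assms(1) assms(2) a(1)] .
  moreover have "s \<noteq> u" proof assume "s = u" then have "ord u t" using assms(2) by simp
    then show False using to_antisym[OF assms(1) a(1)] a(2) by blast qed
  ultimately show ?thesis by (simp add: strict_of_def)
qed
lemma strict_trans2: assumes "term_order ord" "strict_of ord s t" "ord t u" shows "strict_of ord s u"
proof -
  have a: "ord s t" "s \<noteq> t" using assms(2) by (auto simp: strict_of_def)
  have "ord s u" using to_trans[OF assms(1) a(1) assms(3)] .
  moreover have "s \<noteq> u" proof assume "s = u" then have "ord t s" using assms(3) by simp
    then show False using to_antisym[OF assms(1) a(1)] a(2) by blast qed
  ultimately show ?thesis by (simp add: strict_of_def)
qed
lemma strict_not: assumes "term_order ord" shows "strict_of ord s t \<longleftrightarrow> \<not> ord t s"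
proof
  assume "strict_of ord s t" then show "\<not> ord t s" using to_antisym[OF assms] by (auto simp: strict_of_def)
next
  assume "\<not> ord t s" then show "strict_of ord s t" using to_total[OF assms, of s t] to_refl[OF assms, of s]
    by (auto simp: strict_of_def)
qed
lemma strict_mono_add: "term_order ord \<Longrightarrow> strict_of ord s t \<Longrightarrow> strict_of ord (u + s) (u + t)"
  unfolding strict_of_def using to_mono'[of ord s t u] by simp

section \<open>Dickson's lemma\<close>

lemma nat_seq_mono_sub: fixes s :: "nat \<Rightarrow> nat" shows "\<exists>f::nat\<Rightarrow>nat. strict_mono f \<and> mono (\<lambda>n. (s (f n)::nat))"
proof -
  obtain f where f: "strict_mono f" "monoseq (\<lambda>n. s (f n))" using seq_monosub[of s] by blast
  show ?thesis
  proof (cases "mono (\<lambda>n. s (f n))")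
    case True then show ?thesis using f by blast
  next
    case False
    then have anti: "\<And>m n. m \<le> n \<Longrightarrow> s (f n) \<le> s (f m)"
      using f(2) unfolding monoseq_def mono_def by auto
    obtain N where N: "\<And>n. s (f N) \<le> s (f n)"
      using ex_has_least_nat[of "\<lambda>_. True" 0 "\<lambda>n. s (f n)"] by auto
    have c: "s (f (N + n)) = s (f N)" for n using N anti[of N "N+n"] by (simp add: le_antisym)
    have "strict_mono (\<lambda>n. f (N + n))" using f(1) unfolding strict_mono_def by simp
    moreover have "mono (\<lambda>n. s (f (N + n)))" using c by (simp add: mono_def)
    ultimately show ?thesis by blast
  qed
qed

lemma dickson_aux:
  fixes s :: "nat \<Rightarrow> 'v pp"
  shows "finite V \<Longrightarrow> \<exists>f::nat\<Rightarrow>nat. strict_mono f \<and> (\<forall>v\<in>V. mono (\<lambda>n. Poly_Mapping.lookup (s (f n)) v))"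
proof (induction V rule: finite_induct)
  case empty
  have "strict_mono (\<lambda>n::nat. n)" by (simp add: strict_mono_def)
  then show ?case by blast
next
  case (insert v V)
  then obtain f :: "nat \<Rightarrow> nat" where f: "strict_mono f" "\<forall>w\<in>V. mono (\<lambda>n. Poly_Mapping.lookup (s (f n)) w)" by blast
  obtain g :: "nat \<Rightarrow> nat" where g: "strict_mono g" "mono (\<lambda>n. Poly_Mapping.lookup (s (f (g n))) v)"
    using nat_seq_mono_sub[of "\<lambda>n. Poly_Mapping.lookup (s (f n)) v"] by blast
  have "strict_mono (f \<circ> g)" using f(1) g(1) by (simp add: strict_mono_def)
  moreover have "mono (\<lambda>n. Poly_Mapping.lookup (s ((f \<circ> g) n)) w)" if "w \<in> insert v V" for w
  proof (cases "w = v")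
    case True then show ?thesis using g(2) by simp
  next
    case False
    then have "w \<in> V" using that by simp
    then have m: "mono (\<lambda>n. Poly_Mapping.lookup (s (f n)) w)" using f(2) by blast
    have "mono g" using g(1) strict_mono_mono by blast
    then show ?thesis using m unfolding mono_def by simp
  qed
  ultimately show ?case by blast
qed

lemma dickson:
  fixes s :: "nat \<Rightarrow> ('v::finite) pp"
  shows "\<exists>i j. i < j \<and> pp_dvd (s i) (s j)"
proof -
  obtain f :: "nat \<Rightarrow> nat" where f: "strict_mono f" "\<forall>v\<in>UNIV. mono (\<lambda>n. Poly_Mapping.lookup (s (f n)) v)"
    using dickson_aux[of UNIV s] by auto
  have "pp_dvd (s (f 0)) (s (f 1))" using f(2) unfolding pp_dvd_def mono_def by auto
  moreover have "f 0 < f 1" using f(1) by (simp add: strict_mono_def)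
  ultimately show ?thesis by blast
qed

lemma chain_strict:
  assumes "term_order ord" "\<forall>i. strict_of ord (f (Suc i)) (f i)"
  shows "i < j \<Longrightarrow> strict_of ord (f j) (f i)"
proof (induction j)
  case 0 then show ?case by simp
next
  case (Suc j)
  show ?case
  proof (cases "i = j")
    case True then show ?thesis using assms(2) by simp
  next
    case False
    then have "strict_of ord (f j) (f i)" using Suc by simp
    then show ?thesis using strict_trans[OF assms(1)] assms(2) by blast
  qed
qed

lemma term_order_wf:
  assumes "term_order (ord :: 'v::finite pp \<Rightarrow> _)"
  shows "wf {(s, t). strict_of ord s t}"
proof (subst wf_iff_no_infinite_down_chain, rule notI)
  assume "\<exists>f. \<forall>i. (f (Suc i), f i) \<in> {(s, t). strict_of ord s t}"
  then obtain f where f: "\<forall>i. strict_of ord (f (Suc i)) (f i)" by auto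
  obtain i j where ij: "i < j" "pp_dvd (f i) (f j)" using dickson[of f] by blast
  have "ord (f i) (f j)" using to_dvd[OF assms ij(2)] .
  moreover have "strict_of ord (f j) (f i)" using chain_strict[OF assms f ij(1)] .
  ultimately show False using strict_not[OF assms, of "f j" "f i"] by simp
qed

lemma wf_induct_to:
  assumes "term_order (ord :: 'v::finite pp \<Rightarrow> _)"
    and "\<And>t. (\<And>s. strict_of ord s t \<Longrightarrow> P s) \<Longrightarrow> P t"
  shows "P t"
  using wf_induct[OF term_order_wf[OF assms(1)], of P] assms(2) by blast

lemma antichain_finite:
  fixes A :: "('v::finite) pp set"
  assumes "\<forall>s\<in>A. \<forall>t\<in>A. pp_dvd s t \<longrightarrow> s = t"
  shows "finite A"
proof (rule ccontr)
  assume "infinite A"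
  then obtain f :: "nat \<Rightarrow> _" where f: "inj f" "range f \<subseteq> A"
    using infinite_countable_subset by blast
  obtain i j where ij: "i < j" "pp_dvd (f i) (f j)" using dickson[of f] by blast
  have "f i \<in> A" "f j \<in> A" using f(2) by auto
  then have "f i = f j" using assms ij(2) by blast
  then have "i = j" using f(1) by (simp add: inj_eq)
  then show False using ij(1) by simp
qed

lemma finite_max_ex:
  assumes "term_order ord" "finite A" "A \<noteq> {}"
  shows "\<exists>t\<in>A. \<forall>s\<in>A. ord s t"
  using assms(2,3)
proof (induction A rule: finite_ne_induct)
  case (singleton x) then show ?case using to_refl[OF assms(1), of x] by auto
next
  case (insert x F)
  then obtain t where t: "t \<in> F" "\<forall>s\<in>F. ord s t" by blast
  show ?case
  proof (cases "ord x t")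
    case True then show ?thesis using t by auto
  next
    case False
    then have tx: "ord t x" using to_total[OF assms(1), of x t] by blast
    have "\<forall>s\<in>insert x F. ord s x" using t(2) to_trans[OF assms(1) _ tx] to_refl[OF assms(1), of x] by blast
    then show ?thesis by blast
  qed
qed

lemma finite_min_ex:
  assumes "term_order ord" "finite A" "A \<noteq> {}"
  shows "\<exists>t\<in>A. \<forall>s\<in>A. ord t s"
  using assms(2,3)
proof (induction A rule: finite_ne_induct)
  case (singleton x) then show ?case using to_refl[OF assms(1), of x] by auto
next
  case (insert x F)
  then obtain t where t: "t \<in> F" "\<forall>s\<in>F. ord t s" by blast
  show ?case
  proof (cases "ord t x")
    case True then show ?thesis using t by auto
  next
    case False
    then have xt: "ord x t" using to_total[OF assms(1), of x t] by blast
    have "\<forall>s\<in>insert x F. ord x s" using t(2) to_trans[OF assms(1) xt] to_refl[OF assms(1), of x] by blast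
    then show ?thesis by blast
  qed
qed

lemma lterm_eqI:
  assumes "term_order ord" "t \<in> Poly_Mapping.keys f" "\<forall>s\<in>Poly_Mapping.keys f. ord s t"
  shows "lterm ord f = t"
  unfolding lterm_def
proof (rule the_equality)
  show "t \<in> Poly_Mapping.keys f \<and> (\<forall>s\<in>Poly_Mapping.keys f. ord s t)" using assms by blast
next
  fix t' assume "t' \<in> Poly_Mapping.keys f \<and> (\<forall>s\<in>Poly_Mapping.keys f. ord s t')"
  then show "t' = t" using assms to_antisym[OF assms(1), of t t'] by blast
qed

lemma lterm_props:
  assumes "term_order ord" "f \<noteq> 0"
  shows "lterm ord f \<in> Poly_Mapping.keys f" "\<And>s. s \<in> Poly_Mapping.keys f \<Longrightarrow> ord s (lterm ord f)"
proof -
  have ne: "Poly_Mapping.keys f \<noteq> {}" using assms(2) by simp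
  obtain t where t: "t \<in> Poly_Mapping.keys f" "\<forall>s\<in>Poly_Mapping.keys f. ord s t"
    using finite_max_ex[OF assms(1) finite_keys ne] by blast
  have "lterm ord f = t" using lterm_eqI[OF assms(1) t] .
  then show "lterm ord f \<in> Poly_Mapping.keys f" "\<And>s. s \<in> Poly_Mapping.keys f \<Longrightarrow> ord s (lterm ord f)" using t by auto
qed

lemma lcoeff_nz: "term_order ord \<Longrightarrow> f \<noteq> 0 \<Longrightarrow> lcoeff ord f \<noteq> 0"
  unfolding lcoeff_def using lterm_props(1) by (simp add: in_keys_iff)



lemma lookup_single_mult:
  fixes g :: "('v pp \<Rightarrow>\<^sub>0 'k::comm_ring_1)"
  shows "Poly_Mapping.lookup (Poly_Mapping.single u c * g) k =
     (if pp_dvd u k then c * Poly_Mapping.lookup g (k - u) else 0)"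
proof -
  have 1: "Poly_Mapping.lookup (Poly_Mapping.single u c * g) k =
      c * (\<Sum>q. Poly_Mapping.lookup g q when k = u + q)"
    by (simp add: lookup_mult lookup_single when_mult)
  show ?thesis
  proof (cases "pp_dvd u k")
    case True
    have eq: "(\<lambda>q. Poly_Mapping.lookup g q when k = u + q) = (\<lambda>q. Poly_Mapping.lookup g q when q = k - u)"
    proof (rule ext)
      fix q
      have "k = u + q \<longleftrightarrow> q = k - u"
      proof
        assume "k = u + q" then show "q = k - u" by simp
      next
        assume "q = k - u" then show "k = u + q" using pp_dvd_decomp[OF True] by simp
      qed
      then show "(Poly_Mapping.lookup g q when k = u + q) = (Poly_Mapping.lookup g q when q = k - u)"
        by simp
    qed
    have "(\<Sum>q. Poly_Mapping.lookup g q when k = u + q) = Poly_Mapping.lookup g (k - u)"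
      unfolding eq by simp
    then show ?thesis using 1 True by simp
  next
    case False
    have eq: "(\<lambda>q. Poly_Mapping.lookup g q when k = u + q) = (\<lambda>q. 0)"
    proof (rule ext)
      fix q
      have "k \<noteq> u + q" using False pp_dvd_add[of u q] by auto
      then show "(Poly_Mapping.lookup g q when k = u + q) = 0" by simp
    qed
    have "(\<Sum>q. Poly_Mapping.lookup g q when k = u + q) = 0"
      unfolding eq by simp
    then show ?thesis using 1 False by simp
  qed
qed

lemma lookup_single_mult_add:
  fixes g :: "('v pp \<Rightarrow>\<^sub>0 'k::comm_ring_1)"
  shows "Poly_Mapping.lookup (Poly_Mapping.single u c * g) (u + k) = c * Poly_Mapping.lookup g k"
  using lookup_single_mult[of u c g "u + k"] pp_dvd_add[of u k] by simp

lemma keys_single_mult: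
  fixes g :: "('v pp \<Rightarrow>\<^sub>0 'k::field)"
  assumes "c \<noteq> 0"
  shows "Poly_Mapping.keys (Poly_Mapping.single u c * g) = (\<lambda>k. u + k) ` Poly_Mapping.keys g"
proof -
  have "k \<in> Poly_Mapping.keys (Poly_Mapping.single u c * g) \<longleftrightarrow> k \<in> (\<lambda>k. u + k) ` Poly_Mapping.keys g" for k
  proof
    assume k: "k \<in> Poly_Mapping.keys (Poly_Mapping.single u c * g)"
    then have d: "pp_dvd u k" using lookup_single_mult[of u c g k] by (auto simp: in_keys_iff split: if_splits)
    then have "k = u + (k - u)" using pp_dvd_decomp by blast
    moreover have "k - u \<in> Poly_Mapping.keys g" using k d lookup_single_mult[of u c g k] by (auto simp: in_keys_iff)
    ultimately show "k \<in> (\<lambda>k. u + k) ` Poly_Mapping.keys g" by blast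
  next
    assume "k \<in> (\<lambda>k. u + k) ` Poly_Mapping.keys g"
    then obtain k' where "k = u + k'" "k' \<in> Poly_Mapping.keys g" by blast
    then show "k \<in> Poly_Mapping.keys (Poly_Mapping.single u c * g)"
      using lookup_single_mult_add[of u c g k'] assms by (simp add: in_keys_iff)
  qed
  then show ?thesis by blast
qed

lemma single_mult_nz:
  fixes g :: "('v pp \<Rightarrow>\<^sub>0 'k::field)"
  assumes "c \<noteq> 0" "g \<noteq> 0"
  shows "Poly_Mapping.single u c * g \<noteq> 0"
proof -
  have ne: "Poly_Mapping.keys g \<noteq> {}" using assms(2) by simp
  have "Poly_Mapping.keys (Poly_Mapping.single u c * g) \<noteq> {}" unfolding keys_single_mult[OF assms(1)] using ne by simp
  then show ?thesis by (metis keys_zero)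
qed

lemma lterm_single_mult:
  fixes g :: "('v pp \<Rightarrow>\<^sub>0 'k::field)"
  assumes "term_order ord" "c \<noteq> 0" "g \<noteq> 0"
  shows "lterm ord (Poly_Mapping.single u c * g) = u + lterm ord g"
proof (rule lterm_eqI[OF assms(1)])
  show "u + lterm ord g \<in> Poly_Mapping.keys (Poly_Mapping.single u c * g)"
    using keys_single_mult[OF assms(2)] lterm_props(1)[OF assms(1,3)] by blast
  show "\<forall>s\<in>Poly_Mapping.keys (Poly_Mapping.single u c * g). ord s (u + lterm ord g)"
    unfolding keys_single_mult[OF assms(2)] using lterm_props(2)[OF assms(1,3)] to_mono'[OF assms(1)] by auto
qed

lemma lcoeff_single_mult:
  fixes g :: "('v pp \<Rightarrow>\<^sub>0 'k::field)"
  assumes "term_order ord" "c \<noteq> 0" "g \<noteq> 0"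
  shows "lcoeff ord (Poly_Mapping.single u c * g) = c * lcoeff ord g"
  unfolding lcoeff_def lterm_single_mult[OF assms] lookup_single_mult_add by simp

lemma ideal_0: "is_ideal J \<Longrightarrow> 0 \<in> J" by (simp add: is_ideal_def)
lemma ideal_add: "is_ideal J \<Longrightarrow> f \<in> J \<Longrightarrow> g \<in> J \<Longrightarrow> f + g \<in> J" by (simp add: is_ideal_def)
lemma ideal_mult: "is_ideal J \<Longrightarrow> f \<in> J \<Longrightarrow> h * f \<in> J" by (simp add: is_ideal_def)
lemma ideal_uminus: "is_ideal J \<Longrightarrow> f \<in> J \<Longrightarrow> - f \<in> J"
  using ideal_mult[of J f "-1"] by simp
lemma ideal_diff: "is_ideal J \<Longrightarrow> f \<in> J \<Longrightarrow> g \<in> J \<Longrightarrow> f - g \<in> J"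
  using ideal_add[of J f "-g"] ideal_uminus[of J g] by simp

lemma ideal_gen_ideal: "is_ideal (ideal_gen G)"
  unfolding ideal_gen_def is_ideal_def by blast
lemma ideal_gen_sub: "G \<subseteq> ideal_gen G"
  unfolding ideal_gen_def by blast
lemma ideal_gen_least: "is_ideal J \<Longrightarrow> G \<subseteq> J \<Longrightarrow> ideal_gen G \<subseteq> J"
  unfolding ideal_gen_def by blast

definition LTS :: "('v pp \<Rightarrow> 'v pp \<Rightarrow> bool) \<Rightarrow> ('v, 'k::zero) mpoly set \<Rightarrow> 'v pp set" where
  "LTS ord J = {lterm ord f | f. f \<in> J \<and> f \<noteq> 0}"

definition MinLT :: "('v pp \<Rightarrow> 'v pp \<Rightarrow> bool) \<Rightarrow> ('v, 'k::zero) mpoly set \<Rightarrow> 'v pp set" where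
  "MinLT ord J = {s \<in> LTS ord J. \<forall>s'\<in>LTS ord J. pp_dvd s' s \<longrightarrow> s' = s}"

lemma LTS_up:
  fixes J :: "('v, 'k::field) mpoly set"
  assumes "term_order ord" "is_ideal J" "s \<in> LTS ord J" "pp_dvd s u"
  shows "u \<in> LTS ord J"
proof -
  obtain f where f: "f \<in> J" "f \<noteq> 0" "lterm ord f = s" using assms(3) unfolding LTS_def by blast
  let ?h = "Poly_Mapping.single (u - s) (1::'k) * f"
  have "?h \<in> J" using ideal_mult[OF assms(2) f(1)] .
  moreover have "?h \<noteq> 0" using single_mult_nz[OF _ f(2)] by simp
  moreover have "lterm ord ?h = u"
    using lterm_single_mult[OF assms(1) _ f(2), of 1 "u - s"] f(3) pp_dvd_decomp[OF assms(4)]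
    by (simp add: add.commute)
  ultimately have "\<exists>h. u = lterm ord h \<and> h \<in> J \<and> h \<noteq> 0" by metis
  then show ?thesis unfolding LTS_def by simp
qed

lemma MinLT_finite:
  fixes J :: "('v::finite, 'k::zero) mpoly set"
  shows "finite (MinLT ord J)"
  by (rule antichain_finite) (auto simp: MinLT_def)

lemma MinLT_below:
  fixes J :: "('v::finite, 'k::zero) mpoly set"
  assumes "term_order ord"
  shows "s \<in> LTS ord J \<Longrightarrow> \<exists>m\<in>MinLT ord J. pp_dvd m s"
proof (induction s rule: wf_induct_to[OF assms])
  case (1 s)
  show ?case
  proof (cases "s \<in> MinLT ord J")
    case True then show ?thesis using pp_dvd_refl by blast
  next
    case False
    then obtain s' where s': "s' \<in> LTS ord J" "pp_dvd s' s" "s' \<noteq> s"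
      using 1(2) unfolding MinLT_def by blast
    then have "strict_of ord s' s" using to_dvd[OF assms] by (simp add: strict_of_def)
    then obtain m where "m \<in> MinLT ord J" "pp_dvd m s'" using 1(1) s'(1) by blast
    then show ?thesis using s'(2) pp_dvd_trans by blast
  qed
qed

lemma monic_exists:
  fixes J :: "('v, 'k::field) mpoly set"
  assumes "term_order ord" "is_ideal J" "s \<in> LTS ord J"
  shows "\<exists>g. g \<in> J \<and> g \<noteq> 0 \<and> lterm ord g = s \<and> lcoeff ord g = 1"
proof -
  obtain f where f: "f \<in> J" "f \<noteq> 0" "lterm ord f = s" using assms(3) unfolding LTS_def by blast
  have c: "lcoeff ord f \<noteq> 0" using lcoeff_nz[OF assms(1) f(2)] .
  let ?g = "Poly_Mapping.single 0 (inverse (lcoeff ord f)) * f"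
  have "?g \<in> J" using ideal_mult[OF assms(2) f(1)] .
  moreover have "?g \<noteq> 0" using single_mult_nz[OF _ f(2)] c by simp
  moreover have "lterm ord ?g = s" using lterm_single_mult[OF assms(1) _ f(2)] c f(3) by simp
  moreover have "lcoeff ord ?g = 1" using lcoeff_single_mult[OF assms(1) _ f(2)] c by simp
  ultimately show ?thesis by (intro exI[of _ ?g]) simp
qed

lemma minimal_GB_exists:
  fixes J :: "('v::finite, 'k::field) mpoly set"
  assumes "term_order ord" "is_ideal J"
  shows "\<exists>G. is_minimal_GB ord J G"
proof -
  define m where "m s = (SOME g. g \<in> J \<and> g \<noteq> 0 \<and> lterm ord g = s \<and> lcoeff ord g = 1)" for s
  have m: "m s \<in> J \<and> m s \<noteq> 0 \<and> lterm ord (m s) = s \<and> lcoeff ord (m s) = 1" if "s \<in> MinLT ord J" for s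
  proof -
    have "s \<in> LTS ord J" using that unfolding MinLT_def by blast
    then have "\<exists>g. g \<in> J \<and> g \<noteq> 0 \<and> lterm ord g = s \<and> lcoeff ord g = 1" using monic_exists[OF assms] by blast
    then show ?thesis unfolding m_def by (rule someI_ex)
  qed
  define G where "G = m ` MinLT ord J"
  have "finite G" unfolding G_def using MinLT_finite by blast
  moreover have "G \<subseteq> J" "0 \<notin> G" "\<forall>g\<in>G. lcoeff ord g = 1" unfolding G_def using m by auto
  moreover have "\<forall>f\<in>J. f \<noteq> 0 \<longrightarrow> (\<exists>g\<in>G. pp_dvd (lterm ord g) (lterm ord f))"
  proof (intro ballI impI)
    fix f assume "f \<in> J" "f \<noteq> 0"
    then have "lterm ord f \<in> LTS ord J" unfolding LTS_def by blast
    then obtain s where s: "s \<in> MinLT ord J" "pp_dvd s (lterm ord f)" using MinLT_below[OF assms(1)] by blast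
    have "m s \<in> G" unfolding G_def using s(1) by blast
    moreover have "pp_dvd (lterm ord (m s)) (lterm ord f)" using m[OF s(1)] s(2) by simp
    ultimately show "\<exists>g\<in>G. pp_dvd (lterm ord g) (lterm ord f)" by blast
  qed
  moreover have "\<forall>g\<in>G. \<forall>g'\<in>G. g \<noteq> g' \<longrightarrow> \<not> pp_dvd (lterm ord g) (lterm ord g')"
  proof (intro ballI impI)
    fix g g' assume "g \<in> G" "g' \<in> G" "g \<noteq> g'"
    then obtain s s' where ss: "s \<in> MinLT ord J" "s' \<in> MinLT ord J" "g = m s" "g' = m s'" "s \<noteq> s'"
      unfolding G_def by blast
    then have "\<not> pp_dvd s s'" unfolding MinLT_def by blast
    then show "\<not> pp_dvd (lterm ord g) (lterm ord g')" using ss m by simp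
  qed
  ultimately have "is_minimal_GB ord J G" unfolding is_minimal_GB_def is_GB_def by blast
  then show ?thesis by blast
qed

lemma minimal_GB_lterms:
  fixes J :: "('v, 'k::field) mpoly set"
  assumes "is_minimal_GB ord J G"
  shows "lterm ord ` G = MinLT ord J"
proof
  have GB: "finite G" "G \<subseteq> J" "0 \<notin> G" "\<forall>f\<in>J. f \<noteq> 0 \<longrightarrow> (\<exists>g\<in>G. pp_dvd (lterm ord g) (lterm ord f))"
    and mn: "\<forall>g\<in>G. \<forall>g'\<in>G. g \<noteq> g' \<longrightarrow> \<not> pp_dvd (lterm ord g) (lterm ord g')"
    using assms unfolding is_minimal_GB_def is_GB_def by blast+
  show "lterm ord ` G \<subseteq> MinLT ord J"
  proof
    fix t assume "t \<in> lterm ord ` G"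
    then obtain g where g: "g \<in> G" "t = lterm ord g" by blast
    have "t \<in> LTS ord J" unfolding LTS_def using g GB by blast
    moreover have "s' = t" if hs: "s' \<in> LTS ord J" "pp_dvd s' t" for s'
    proof -
      obtain f where f: "f \<in> J" "f \<noteq> 0" "s' = lterm ord f" using hs(1) unfolding LTS_def by blast
      then obtain g' where g': "g' \<in> G" "pp_dvd (lterm ord g') s'" using GB(4) by blast
      then have "pp_dvd (lterm ord g') (lterm ord g)" using hs(2) g(2) pp_dvd_trans by blast
      then have "g' = g" using mn g(1) g'(1) by blast
      then show "s' = t" using g' hs(2) g(2) pp_dvd_antisym by blast
    qed
    ultimately show "t \<in> MinLT ord J" unfolding MinLT_def by blast
  qed
  show "MinLT ord J \<subseteq> lterm ord ` G"
  proof
    fix s assume s: "s \<in> MinLT ord J"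
    then obtain f where f: "f \<in> J" "f \<noteq> 0" "s = lterm ord f" unfolding MinLT_def LTS_def by blast
    then obtain g where g: "g \<in> G" "pp_dvd (lterm ord g) s" using GB(4) by blast
    have "lterm ord g \<in> LTS ord J" unfolding LTS_def using g(1) GB(2,3) by blast
    then have "lterm ord g = s" using s g(2) unfolding MinLT_def by blast
    then show "s \<in> lterm ord ` G" using g(1) by blast
  qed
qed

lemma sorted_exists:
  assumes "term_order ord"
  shows "finite A \<Longrightarrow> \<exists>T. sorted_wrt (strict_of ord) T \<and> set T = A"
proof (induction "card A" arbitrary: A)
  case 0
  then have "A = {}" by simp
  then show ?case by (intro exI[of _ "[]"]) simp
next
  case (Suc n)
  then have ne: "A \<noteq> {}" by auto
  obtain t where t: "t \<in> A" "\<forall>s\<in>A. ord s t" using finite_max_ex[OF assms Suc(3) ne] by blast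
  have "n = card (A - {t})" using Suc(2) t(1) Suc(3) by simp
  then obtain T where T: "sorted_wrt (strict_of ord) T" "set T = A - {t}"
    using Suc(1)[of "A - {t}"] Suc(3) by blast
  have "sorted_wrt (strict_of ord) (T @ [t])"
    using T t by (auto simp: sorted_wrt_append strict_of_def)
  moreover have "set (T @ [t]) = A" using T t(1) by auto
  ultimately show ?case by blast
qed

lemma sorted_unique:
  assumes "term_order ord"
  shows "sorted_wrt (strict_of ord) xs \<Longrightarrow> sorted_wrt (strict_of ord) ys \<Longrightarrow> set xs = set ys \<Longrightarrow> xs = ys"
proof (induction xs arbitrary: ys)
  case Nil then show ?case by simp
next
  case (Cons x xs)
  then obtain y ys' where ys: "ys = y # ys'" by (cases ys) auto
  have xy: "x = y"
  proof (rule ccontr)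
    assume ne: "x \<noteq> y"
    have "x \<in> set ys'" using Cons(4) ys ne by auto
    then have "strict_of ord y x" using Cons(3) ys by simp
    moreover have "y \<in> set xs" using Cons(4) ys ne by auto
    then have "strict_of ord x y" using Cons(2) by simp
    ultimately show False using strict_not[OF assms] by (auto simp: strict_of_def)
  qed
  have "x \<notin> set xs" using Cons(2) strict_irrefl by auto
  moreover have "y \<notin> set ys'" using Cons(3) ys strict_irrefl by auto
  ultimately have "set xs = set ys'" using Cons(4) ys xy by auto
  then have "xs = ys'" using Cons ys by simp
  then show ?case using xy ys by simp
qed

lemma O_tuple_props:
  fixes J :: "('v::finite, 'k::field) mpoly set"
  assumes "term_order ord" "is_ideal J"
  shows "sorted_wrt (strict_of ord) (O_tuple ord J) \<and> set (O_tuple ord J) = MinLT ord J"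
proof -
  obtain G where G: "is_minimal_GB ord J G" using minimal_GB_exists[OF assms] by blast
  have "finite G" using G unfolding is_minimal_GB_def is_GB_def by simp
  then obtain T where T: "sorted_wrt (strict_of ord) T" "set T = lterm ord ` G"
    using sorted_exists[OF assms(1), of "lterm ord ` G"] by blast
  have "\<exists>T. \<exists>G. is_minimal_GB ord J G \<and> sorted_wrt (strict_of ord) T \<and> set T = lterm ord ` G"
    using G T by blast
  then have "\<exists>G. is_minimal_GB ord J G \<and> sorted_wrt (strict_of ord) (O_tuple ord J) \<and> set (O_tuple ord J) = lterm ord ` G"
    unfolding O_tuple_def by (rule someI_ex)
  then obtain G' where "is_minimal_GB ord J G'" "sorted_wrt (strict_of ord) (O_tuple ord J)"
      "set (O_tuple ord J) = lterm ord ` G'" by blast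
  then show ?thesis using minimal_GB_lterms[of ord J G'] by simp
qed



lemma keys_diff_sub: "Poly_Mapping.keys (f - g) \<subseteq> Poly_Mapping.keys f \<union> Poly_Mapping.keys (g :: 'a \<Rightarrow>\<^sub>0 'b::ab_group_add)"
  by (auto simp: in_keys_iff lookup_minus)

lemma keys_add_sub: "Poly_Mapping.keys (f + g) \<subseteq> Poly_Mapping.keys f \<union> Poly_Mapping.keys (g :: 'a \<Rightarrow>\<^sub>0 'b::ab_group_add)"
  by (auto simp: in_keys_iff lookup_add)

section \<open>Normal forms\<close>

definition nf_rel :: "('v pp \<Rightarrow> 'v pp \<Rightarrow> bool) \<Rightarrow> ('v, 'k::field) mpoly set \<Rightarrow> ('v, 'k) mpoly \<Rightarrow> ('v, 'k) mpoly \<Rightarrow> bool" where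
  "nf_rel ord J f r \<longleftrightarrow> f - r \<in> J \<and> (\<forall>u\<in>Poly_Mapping.keys r. u \<notin> LTS ord J) \<and>
     (\<forall>u\<in>Poly_Mapping.keys r. \<exists>w\<in>Poly_Mapping.keys f. ord u w)"

lemma reduce_step:
  fixes J :: "('v::finite, 'k::field) mpoly set"
  assumes to: "term_order ord" and id: "is_ideal J"
    and t: "t \<in> Poly_Mapping.keys f" "t \<in> LTS ord J"
    and below: "\<forall>u\<in>Poly_Mapping.keys f. u \<in> LTS ord J \<longrightarrow> ord u t"
  shows "\<exists>f'. f - f' \<in> J \<and> (\<forall>u\<in>Poly_Mapping.keys f'. u \<in> LTS ord J \<longrightarrow> strict_of ord u t) \<and>
     (\<forall>u\<in>Poly_Mapping.keys f'. \<exists>w\<in>Poly_Mapping.keys f. ord u w)"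
proof -
  obtain h where h: "h \<in> J" "h \<noteq> 0" "lterm ord h = t" "lcoeff ord h = 1"
    using monic_exists[OF to id t(2)] by blast
  define c where "c = Poly_Mapping.lookup f t"
  define f' where "f' = f - Poly_Mapping.single 0 c * h"
  have "f - f' = Poly_Mapping.single 0 c * h" unfolding f'_def by simp
  then have "f - f' \<in> J" using ideal_mult[OF id h(1)] by simp
  moreover have "\<forall>u\<in>Poly_Mapping.keys f'. u \<in> LTS ord J \<longrightarrow> strict_of ord u t"
    and "\<forall>u\<in>Poly_Mapping.keys f'. \<exists>w\<in>Poly_Mapping.keys f. ord u w"
  proof -
    have kh: "Poly_Mapping.lookup (Poly_Mapping.single 0 c * h) u = c * Poly_Mapping.lookup h u" for u
      using lookup_single_mult_add[of 0 c h u] by simp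
    have lt: "Poly_Mapping.lookup f' t = 0"
      unfolding f'_def lookup_minus kh using h(3,4) unfolding lcoeff_def c_def by simp
    have hk: "u \<in> Poly_Mapping.keys h \<Longrightarrow> ord u t" for u using lterm_props(2)[OF to h(2)] h(3) by blast
    have ks: "Poly_Mapping.keys f' \<subseteq> Poly_Mapping.keys f \<union> Poly_Mapping.keys h"
    proof
      fix u assume "u \<in> Poly_Mapping.keys f'"
      then show "u \<in> Poly_Mapping.keys f \<union> Poly_Mapping.keys h"
        unfolding f'_def by (auto simp: in_keys_iff lookup_minus kh)
    qed
    show "\<forall>u\<in>Poly_Mapping.keys f'. u \<in> LTS ord J \<longrightarrow> strict_of ord u t"
    proof (intro ballI impI)
      fix u assume u: "u \<in> Poly_Mapping.keys f'" "u \<in> LTS ord J"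
      then have "u \<noteq> t" using lt by (auto simp: in_keys_iff)
      moreover have "ord u t" using u ks below hk by blast
      ultimately show "strict_of ord u t" by (simp add: strict_of_def)
    qed
    show "\<forall>u\<in>Poly_Mapping.keys f'. \<exists>w\<in>Poly_Mapping.keys f. ord u w"
    proof
      fix u assume u: "u \<in> Poly_Mapping.keys f'"
      then have "u \<in> Poly_Mapping.keys f \<or> u \<in> Poly_Mapping.keys h" using ks by blast
      then show "\<exists>w\<in>Poly_Mapping.keys f. ord u w" using hk t(1) to_refl[OF to] by blast
    qed
  qed
  ultimately show ?thesis by blast
qed

lemma nf_rel_trans:
  fixes J :: "('v, 'k::field) mpoly set"
  assumes to: "term_order ord" and id: "is_ideal J"
    and "f - f' \<in> J" "\<forall>u\<in>Poly_Mapping.keys f'. \<exists>w\<in>Poly_Mapping.keys f. ord u w" "nf_rel ord J f' r"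
  shows "nf_rel ord J f r"
proof -
  have "f' - r \<in> J" using assms(5) unfolding nf_rel_def by blast
  then have "(f - f') + (f' - r) \<in> J" using ideal_add[OF id assms(3)] by blast
  moreover have "(f - f') + (f' - r) = f - r" by simp
  ultimately have "f - r \<in> J" by simp
  moreover have "\<forall>u\<in>Poly_Mapping.keys r. \<exists>w\<in>Poly_Mapping.keys f. ord u w"
    using assms(4,5) to_trans[OF to] unfolding nf_rel_def by blast
  ultimately show ?thesis using assms(5) unfolding nf_rel_def by blast
qed

lemma nf_aux:
  fixes J :: "('v::finite, 'k::field) mpoly set"
  assumes to: "term_order ord" and id: "is_ideal J"
  shows "\<forall>f. (\<forall>u\<in>Poly_Mapping.keys f. u \<in> LTS ord J \<longrightarrow> strict_of ord u t) \<longrightarrow> (\<exists>r. nf_rel ord J f r)"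
proof (induction t rule: wf_induct_to[OF to])
  case (1 t)
  show ?case
  proof (intro allI impI)
    fix f :: "('v, 'k) mpoly" assume f: "\<forall>u\<in>Poly_Mapping.keys f. u \<in> LTS ord J \<longrightarrow> strict_of ord u t"
    define R where "R = {u \<in> Poly_Mapping.keys f. u \<in> LTS ord J}"
    show "\<exists>r. nf_rel ord J f r"
    proof (cases "R = {}")
      case True
      then have "nf_rel ord J f f" unfolding nf_rel_def R_def using ideal_0[OF id] to_refl[OF to] by auto
      then show ?thesis by blast
    next
      case False
      have "finite R" unfolding R_def by simp
      then obtain t' where t': "t' \<in> R" "\<forall>s\<in>R. ord s t'" using finite_max_ex[OF to _ False] by blast
      have st: "strict_of ord t' t" using t'(1) f unfolding R_def by blast
      obtain f' where f': "f - f' \<in> J" "\<forall>u\<in>Poly_Mapping.keys f'. u \<in> LTS ord J \<longrightarrow> strict_of ord u t'"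
          "\<forall>u\<in>Poly_Mapping.keys f'. \<exists>w\<in>Poly_Mapping.keys f. ord u w"
        using reduce_step[OF to id, of t' f] t' unfolding R_def by blast
      obtain r where "nf_rel ord J f' r" using 1[OF st] f'(2) by blast
      then have "nf_rel ord J f r" using nf_rel_trans[OF to id f'(1) f'(3)] by blast
      then show ?thesis by blast
    qed
  qed
qed

lemma nf_exists:
  fixes J :: "('v::finite, 'k::field) mpoly set"
  assumes to: "term_order ord" and id: "is_ideal J"
  shows "\<exists>r. nf_rel ord J f r"
proof -
  define R where "R = {u \<in> Poly_Mapping.keys f. u \<in> LTS ord J}"
  show ?thesis
  proof (cases "R = {}")
    case True
    then have "nf_rel ord J f f" unfolding nf_rel_def R_def using ideal_0[OF id] to_refl[OF to] by auto
    then show ?thesis by blast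
  next
    case False
    have "finite R" unfolding R_def by simp
    then obtain t where t: "t \<in> R" "\<forall>s\<in>R. ord s t" using finite_max_ex[OF to _ False] by blast
    obtain f' where f': "f - f' \<in> J" "\<forall>u\<in>Poly_Mapping.keys f'. u \<in> LTS ord J \<longrightarrow> strict_of ord u t"
        "\<forall>u\<in>Poly_Mapping.keys f'. \<exists>w\<in>Poly_Mapping.keys f. ord u w"
      using reduce_step[OF to id, of t f] t unfolding R_def by blast
    obtain r where "nf_rel ord J f' r" using nf_aux[OF to id, of t] f'(2) by blast
    then have "nf_rel ord J f r" using nf_rel_trans[OF to id f'(1) f'(3)] by blast
    then show ?thesis by blast
  qed
qed

section \<open>Reduced Groebner bases\<close>

lemma reduced_GB_exists:
  fixes J :: "('v::finite, 'k::field) mpoly set"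
  assumes to: "term_order ord" and id: "is_ideal J"
  shows "\<exists>G. is_reduced_GB ord J G"
proof -
  define r where "r s = (SOME r. nf_rel ord J (Poly_Mapping.single s 1) r)" for s
  have r: "nf_rel ord J (Poly_Mapping.single s 1) (r s)" for s
    unfolding r_def using nf_exists[OF to id] by (rule someI_ex)
  define g where "g s = Poly_Mapping.single s 1 - r s" for s
  have gJ: "g s \<in> J" for s using r[of s] unfolding g_def nf_rel_def by simp
  have rk: "u \<in> Poly_Mapping.keys (r s) \<Longrightarrow> u \<notin> LTS ord J \<and> ord u s" for u s
    using r[of s] unfolding nf_rel_def by simp
  have gk: "Poly_Mapping.keys (g s) \<subseteq> insert s (Poly_Mapping.keys (r s))" for s
    unfolding g_def by (auto simp: in_keys_iff lookup_minus lookup_single when_def split: if_splits)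
  have gprops: "g s \<noteq> 0 \<and> lterm ord (g s) = s \<and> lcoeff ord (g s) = 1" if s: "s \<in> LTS ord J" for s
  proof -
    have "s \<notin> Poly_Mapping.keys (r s)" using rk s by blast
    then have ls: "Poly_Mapping.lookup (g s) s = 1" unfolding g_def by (simp add: lookup_minus in_keys_iff)
    then have sk: "s \<in> Poly_Mapping.keys (g s)" by (simp add: in_keys_iff)
    have "\<forall>u\<in>Poly_Mapping.keys (g s). ord u s" using gk rk to_refl[OF to] by blast
    then have "lterm ord (g s) = s" using lterm_eqI[OF to sk] by blast
    moreover have "g s \<noteq> 0" using sk by auto
    ultimately show ?thesis using ls unfolding lcoeff_def by simp
  qed
  define G where "G = g ` MinLT ord J"
  have mlts: "s \<in> MinLT ord J \<Longrightarrow> s \<in> LTS ord J" for s unfolding MinLT_def by blast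
  have gnz: "s \<in> MinLT ord J \<Longrightarrow> g s \<noteq> 0" for s using gprops[OF mlts[of s]] by simp
  have glc: "s \<in> MinLT ord J \<Longrightarrow> lcoeff ord (g s) = 1" for s using gprops[OF mlts[of s]] by simp
  have "finite G" unfolding G_def using MinLT_finite by blast
  moreover have "G \<subseteq> J" unfolding G_def using gJ by blast
  moreover have "0 \<notin> G"
  proof
    assume "0 \<in> G" then obtain s where "s \<in> MinLT ord J" "0 = g s" unfolding G_def by blast
    then show False using gnz by metis
  qed
  moreover have "\<forall>gg\<in>G. lcoeff ord gg = 1"
  proof
    fix gg assume "gg \<in> G" then obtain s where "s \<in> MinLT ord J" "gg = g s" unfolding G_def by blast
    then show "lcoeff ord gg = 1" using glc by simp
  qed
  moreover have "\<forall>f\<in>J. f \<noteq> 0 \<longrightarrow> (\<exists>gg\<in>G. pp_dvd (lterm ord gg) (lterm ord f))"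
  proof (intro ballI impI)
    fix f assume "f \<in> J" "f \<noteq> 0"
    then have "lterm ord f \<in> LTS ord J" unfolding LTS_def by blast
    then obtain s where s: "s \<in> MinLT ord J" "pp_dvd s (lterm ord f)" using MinLT_below[OF to] by blast
    have "g s \<in> G" unfolding G_def using s(1) by blast
    moreover have "pp_dvd (lterm ord (g s)) (lterm ord f)" using gprops[OF mlts[OF s(1)]] s(2) by simp
    ultimately show "\<exists>gg\<in>G. pp_dvd (lterm ord gg) (lterm ord f)" by blast
  qed
  moreover have "\<forall>gg\<in>G. \<forall>gg'\<in>G. gg \<noteq> gg' \<longrightarrow> (\<forall>t\<in>Poly_Mapping.keys gg'. \<not> pp_dvd (lterm ord gg) t)"
  proof (intro ballI impI)
    fix gg gg' t assume a: "gg \<in> G" "gg' \<in> G" "gg \<noteq> gg'" "t \<in> Poly_Mapping.keys gg'"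
    then obtain s s' where ss: "s \<in> MinLT ord J" "s' \<in> MinLT ord J" "gg = g s" "gg' = g s'"
      unfolding G_def by blast
    then have ne: "s \<noteq> s'" using a(3) by blast
    have lg: "lterm ord gg = s" using gprops[OF mlts[OF ss(1)]] ss(3) by simp
    show "\<not> pp_dvd (lterm ord gg) t"
    proof
      assume d: "pp_dvd (lterm ord gg) t"
      have "t = s' \<or> t \<in> Poly_Mapping.keys (r s')" using gk a(4) ss(4) by blast
      then show False
      proof
        assume "t = s'"
        then have "pp_dvd s s'" using d lg by simp
        then show False using ss(1,2) ne unfolding MinLT_def by blast
      next
        assume tr: "t \<in> Poly_Mapping.keys (r s')"
        have "t \<in> LTS ord J" using LTS_up[OF to id mlts[OF ss(1)]] d lg by simp
        then show False using rk[OF tr] by blast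
      qed
    qed
  qed
  ultimately have "is_reduced_GB ord J G" unfolding is_reduced_GB_def is_GB_def by blast
  then show ?thesis by blast
qed

lemma reduced_is_minimal:
  fixes J :: "('v, 'k::field) mpoly set"
  assumes to: "term_order ord" and "is_reduced_GB ord J G"
  shows "is_minimal_GB ord J G"
proof -
  have GB: "is_GB ord J G" "\<forall>g\<in>G. lcoeff ord g = 1"
    and rd: "\<forall>g\<in>G. \<forall>g'\<in>G. g \<noteq> g' \<longrightarrow> (\<forall>t\<in>Poly_Mapping.keys g'. \<not> pp_dvd (lterm ord g) t)"
    using assms(2) unfolding is_reduced_GB_def by blast+
  have nz: "0 \<notin> G" using GB(1) unfolding is_GB_def by blast
  have "\<forall>g\<in>G. \<forall>g'\<in>G. g \<noteq> g' \<longrightarrow> \<not> pp_dvd (lterm ord g) (lterm ord g')"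
  proof (intro ballI impI)
    fix g g' assume a: "g \<in> G" "g' \<in> G" "g \<noteq> g'"
    have "g' \<noteq> 0" using nz a(2) by blast
    then have "lterm ord g' \<in> Poly_Mapping.keys g'" using lterm_props(1)[OF to] by blast
    then show "\<not> pp_dvd (lterm ord g) (lterm ord g')" using rd a by blast
  qed
  then show ?thesis unfolding is_minimal_GB_def using GB by blast
qed

lemma reduced_GB_unique_aux:
  fixes J :: "('v::finite, 'k::field) mpoly set"
  assumes to: "term_order ord" and id: "is_ideal J"
    and G: "is_reduced_GB ord J G" and G': "is_reduced_GB ord J G'"
  shows "G \<subseteq> G'"
proof
  have mG: "lterm ord ` G = MinLT ord J" using minimal_GB_lterms[OF reduced_is_minimal[OF to G]] .
  have mG': "lterm ord ` G' = MinLT ord J" using minimal_GB_lterms[OF reduced_is_minimal[OF to G']] .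
  have GB: "G \<subseteq> J" "0 \<notin> G" "\<forall>g\<in>G. lcoeff ord g = 1"
    "\<forall>g\<in>G. \<forall>g'\<in>G. g \<noteq> g' \<longrightarrow> (\<forall>t\<in>Poly_Mapping.keys g'. \<not> pp_dvd (lterm ord g) t)"
    using G unfolding is_reduced_GB_def is_GB_def by blast+
  have GB': "G' \<subseteq> J" "0 \<notin> G'" "\<forall>g\<in>G'. lcoeff ord g = 1"
    "\<forall>g\<in>G'. \<forall>g'\<in>G'. g \<noteq> g' \<longrightarrow> (\<forall>t\<in>Poly_Mapping.keys g'. \<not> pp_dvd (lterm ord g) t)"
    using G' unfolding is_reduced_GB_def is_GB_def by blast+
  fix g assume g: "g \<in> G"
  have "lterm ord g \<in> lterm ord ` G'" using g mG mG' by (metis imageI)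
  then obtain g' where g': "g' \<in> G'" "lterm ord g' = lterm ord g" by (metis imageE)
  define s where "s = lterm ord g"
  have gnz: "g \<noteq> 0" using g GB(2) by blast
  have g'nz: "g' \<noteq> 0" using g'(1) GB'(2) by blast
  show "g \<in> G'"
  proof (cases "g = g'")
    case True then show ?thesis using g'(1) by simp
  next
    case False
    define d where "d = g - g'"
    have dnz: "d \<noteq> 0" using False unfolding d_def by simp
    have dJ: "d \<in> J" unfolding d_def using ideal_diff[OF id] g g'(1) GB(1) GB'(1) by blast
    define u where "u = lterm ord d"
    have uk: "u \<in> Poly_Mapping.keys d" unfolding u_def using lterm_props(1)[OF to dnz] .
    have l1: "Poly_Mapping.lookup g s = 1" using GB(3) g unfolding lcoeff_def s_def by blast
    have l2: "Poly_Mapping.lookup g' s = 1" using GB'(3) g'(1) g'(2) unfolding lcoeff_def s_def by metis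
    have ls: "Poly_Mapping.lookup d s = 0" unfolding d_def lookup_minus using l1 l2 by simp
    then have us: "u \<noteq> s" using uk by (auto simp: in_keys_iff)
    have uL: "u \<in> LTS ord J" unfolding u_def LTS_def using dJ dnz by blast
    obtain m where m: "m \<in> MinLT ord J" "pp_dvd m u" using MinLT_below[OF to uL] by blast
    have "Poly_Mapping.keys d \<subseteq> Poly_Mapping.keys g \<union> Poly_Mapping.keys g'" unfolding d_def by (rule keys_diff_sub)
    then have "u \<in> Poly_Mapping.keys g \<union> Poly_Mapping.keys g'" using uk by blast
    then have "u \<in> Poly_Mapping.keys g \<or> u \<in> Poly_Mapping.keys g'" by simp
    then show ?thesis
    proof
      assume ug: "u \<in> Poly_Mapping.keys g"
      have "m \<in> lterm ord ` G" using m(1) mG by simp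
      then obtain h where h: "h \<in> G" "lterm ord h = m" by blast
      show ?thesis
      proof (cases "h = g")
        case True
        then have "ord s u" using to_dvd[OF to] m(2) h(2) s_def by simp
        moreover have "ord u s" using lterm_props(2)[OF to gnz ug] s_def by simp
        ultimately have "s = u" using to_antisym[OF to, of s u] by blast
        then show ?thesis using us by simp
      next
        case False
        then have "\<not> pp_dvd (lterm ord h) u" using GB(4) h(1) g ug by blast
        then show ?thesis using h(2) m(2) by simp
      qed
    next
      assume ug: "u \<in> Poly_Mapping.keys g'"
      have "m \<in> lterm ord ` G'" using m(1) mG' by simp
      then obtain h where h: "h \<in> G'" "lterm ord h = m" by blast
      show ?thesis
      proof (cases "h = g'")
        case True
        then have "ord s u" using to_dvd[OF to] m(2) h(2) s_def g'(2) by simp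
        moreover have "ord u s" using lterm_props(2)[OF to g'nz ug] s_def g'(2) by simp
        ultimately have "s = u" using to_antisym[OF to, of s u] by blast
        then show ?thesis using us by simp
      next
        case False
        then have "\<not> pp_dvd (lterm ord h) u" using GB'(4) h(1) g'(1) ug by blast
        then show ?thesis using h(2) m(2) by simp
      qed
    qed
  qed
qed

lemma reduced_GB_props:
  fixes J :: "('v::finite, 'k::field) mpoly set"
  assumes to: "term_order ord" and id: "is_ideal J"
  shows "is_reduced_GB ord J (reduced_GB ord J)"
proof -
  obtain G where G: "is_reduced_GB ord J G" using reduced_GB_exists[OF to id] by blast
  have "\<And>G'. is_reduced_GB ord J G' \<Longrightarrow> G' = G"
    using reduced_GB_unique_aux[OF to id] G by blast
  then show ?thesis unfolding reduced_GB_def using G by (metis theI)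
qed



section \<open>p-integral rationals and reduction mod p\<close>

definition pint :: "nat \<Rightarrow> rat \<Rightarrow> bool" where
  "pint P r \<longleftrightarrow> (\<exists>a b. r = of_int a / of_int b \<and> \<not> int P dvd b)"

lemma ofint_modring_zero: "(of_int a :: 'p::prime_card mod_ring) = 0 \<longleftrightarrow> int CARD('p) dvd a"
  by (metis (mono_tags, lifting) dvd_0_left_iff dvd_nat_abs_iff
    gcd_nat.order_iff_strict nat_abs_dvd_iff of_int_hom.hom_dvd
    of_int_of_nat_eq of_nat_0_mod_ring_dvd of_nat_card_eq_0)

lemma prime_P: "prime (int CARD('p::prime_card))" by (rule prime_card_int)

lemma P_not_dvd_1: "\<not> int CARD('p::prime_card) dvd 1"
  using prime_P[where 'p='p] by (meson not_prime_unit)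

lemma P_dvd_mult: "int CARD('p::prime_card) dvd a * b \<Longrightarrow> int CARD('p) dvd a \<or> int CARD('p) dvd b"
  using prime_P[where 'p='p] prime_dvd_mult_iff by blast

lemma rat_mod_rep:
  assumes r: "r = of_int a / of_int b" and nd: "\<not> int CARD('p::prime_card) dvd b"
  shows "(rat_mod r :: 'p mod_ring) = of_int a / of_int b"
proof -
  obtain a' b' where q: "quotient_of r = (a', b')" by (cases "quotient_of r")
  have r': "r = of_int a' / of_int b'" using quotient_of_div[OF q] .
  have b'pos: "b' > 0" using quotient_of_denom_pos[OF q] .
  have cop: "coprime a' b'" using quotient_of_coprime[OF q] .
  have bnz: "b \<noteq> 0" using nd by auto
  have "(of_int a / of_int b :: rat) = of_int a' / of_int b'" using r r' by simp
  then have "(of_int a * of_int b' :: rat) = of_int a' * of_int b" using bnz b'pos by (simp add: frac_eq_eq)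
  then have cross: "a * b' = a' * b" by (metis of_int_eq_iff of_int_mult)
  have ndb': "\<not> int CARD('p) dvd b'"
  proof
    assume d: "int CARD('p) dvd b'"
    then have "int CARD('p) dvd a' * b" using cross by (metis dvd_mult)
    then have "int CARD('p) dvd a'" using P_dvd_mult[where 'p='p] nd by blast
    then have "is_unit (int CARD('p))" using d cop coprime_common_divisor by blast
    then show False using prime_P[where 'p='p] not_prime_unit by blast
  qed
  have m: "(rat_mod r :: 'p mod_ring) = of_int a' / of_int b'" unfolding rat_mod_def q by simp
  have nz1: "(of_int b :: 'p mod_ring) \<noteq> 0" using nd by (simp add: ofint_modring_zero)
  have nz2: "(of_int b' :: 'p mod_ring) \<noteq> 0" using ndb' by (simp add: ofint_modring_zero)
  have "(of_int a * of_int b' :: 'p mod_ring) = of_int a' * of_int b" using cross by (metis of_int_mult)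
  then have "(of_int a' / of_int b' :: 'p mod_ring) = of_int a / of_int b" using nz1 nz2 by (simp add: frac_eq_eq)
  then show ?thesis using m by simp
qed

lemma pint_quot: "\<not> int P dvd snd (quotient_of r) \<Longrightarrow> pint P r"
  unfolding pint_def by (metis prod.collapse quotient_of_div)

lemma pint_of_int: "pint CARD('p::prime_card) (of_int k)"
  unfolding pint_def using P_not_dvd_1[where 'p='p] by (intro exI[of _ k] exI[of _ 1]) simp

lemma pint_0: "pint CARD('p::prime_card) 0" using pint_of_int[where 'p='p, of 0] by simp

lemma pint_add: assumes "pint CARD('p::prime_card) x" "pint CARD('p) y" shows "pint CARD('p) (x + y)"
proof -
  obtain a b c d where x: "x = of_int a / of_int b" "\<not> int CARD('p) dvd b"
    and y: "y = of_int c / of_int d" "\<not> int CARD('p) dvd d" using assms unfolding pint_def by blast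
  have "b \<noteq> 0" "d \<noteq> 0" using x(2) y(2) by auto
  then have "x + y = of_int (a * d + c * b) / of_int (b * d)" using x y by (simp add: field_simps)
  moreover have "\<not> int CARD('p) dvd b * d" using x(2) y(2) P_dvd_mult[where 'p='p] by blast
  ultimately show ?thesis unfolding pint_def by blast
qed

lemma pint_mult: assumes "pint CARD('p::prime_card) x" "pint CARD('p) y" shows "pint CARD('p) (x * y)"
proof -
  obtain a b c d where x: "x = of_int a / of_int b" "\<not> int CARD('p) dvd b"
    and y: "y = of_int c / of_int d" "\<not> int CARD('p) dvd d" using assms unfolding pint_def by blast
  have "x * y = of_int (a * c) / of_int (b * d)" using x y by simp
  moreover have "\<not> int CARD('p) dvd b * d" using x(2) y(2) P_dvd_mult[where 'p='p] by blast
  ultimately show ?thesis unfolding pint_def by blast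
qed

lemma pint_uminus: assumes "pint CARD('p::prime_card) x" shows "pint CARD('p) (- x)"
  using pint_mult[OF pint_of_int[of "-1"] assms] by simp

lemma pint_diff: assumes "pint CARD('p::prime_card) x" "pint CARD('p) y" shows "pint CARD('p) (x - y)"
  using pint_add[OF assms(1) pint_uminus[OF assms(2)]] by simp

lemma rat_mod_add: assumes "pint CARD('p::prime_card) x" "pint CARD('p) y"
  shows "(rat_mod (x + y) :: 'p mod_ring) = rat_mod x + rat_mod y"
proof -
  obtain a b c d where x: "x = of_int a / of_int b" "\<not> int CARD('p) dvd b"
    and y: "y = of_int c / of_int d" "\<not> int CARD('p) dvd d" using assms unfolding pint_def by blast
  have "b \<noteq> 0" "d \<noteq> 0" using x(2) y(2) by auto
  then have e: "x + y = of_int (a * d + c * b) / of_int (b * d)" using x y by (simp add: field_simps)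
  have nd: "\<not> int CARD('p) dvd b * d" using x(2) y(2) P_dvd_mult[where 'p='p] by blast
  have nz1: "(of_int b :: 'p mod_ring) \<noteq> 0" using x(2) by (simp add: ofint_modring_zero)
  have nz2: "(of_int d :: 'p mod_ring) \<noteq> 0" using y(2) by (simp add: ofint_modring_zero)
  have "(rat_mod (x + y) :: 'p mod_ring) = of_int (a * d + c * b) / of_int (b * d)"
    using rat_mod_rep[OF e nd] .
  also have "\<dots> = (of_int a * of_int d + of_int c * of_int b) / (of_int b * of_int d)" by simp
  also have "\<dots> = of_int a / of_int b + of_int c / of_int d" using add_frac_eq[OF nz1 nz2] by simp
  also have "\<dots> = rat_mod x + rat_mod y" using rat_mod_rep[OF x(1,2)] rat_mod_rep[OF y(1,2)] by simp
  finally show ?thesis .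
qed

lemma rat_mod_mult: assumes "pint CARD('p::prime_card) x" "pint CARD('p) y"
  shows "(rat_mod (x * y) :: 'p mod_ring) = rat_mod x * rat_mod y"
proof -
  obtain a b c d where x: "x = of_int a / of_int b" "\<not> int CARD('p) dvd b"
    and y: "y = of_int c / of_int d" "\<not> int CARD('p) dvd d" using assms unfolding pint_def by blast
  have e: "x * y = of_int (a * c) / of_int (b * d)" using x y by simp
  have nd: "\<not> int CARD('p) dvd b * d" using x(2) y(2) P_dvd_mult[where 'p='p] by blast
  have "(rat_mod (x * y) :: 'p mod_ring) = of_int (a * c) / of_int (b * d)"
    using rat_mod_rep[OF e nd] .
  also have "\<dots> = (of_int a / of_int b) * (of_int c / of_int d)" by simp
  also have "\<dots> = rat_mod x * rat_mod y" using rat_mod_rep[OF x(1,2)] rat_mod_rep[OF y(1,2)] by simp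
  finally show ?thesis .
qed

lemma rat_mod_of_int: "(rat_mod (of_int k) :: 'p::prime_card mod_ring) = of_int k"
  using rat_mod_rep[of "of_int k" k 1] P_not_dvd_1[where 'p='p] by simp

lemma rat_mod_0: "(rat_mod 0 :: 'p::prime_card mod_ring) = 0"
  using rat_mod_of_int[where 'p='p, of 0] by simp

lemma rat_mod_1: "(rat_mod 1 :: 'p::prime_card mod_ring) = 1"
  using rat_mod_of_int[where 'p='p, of 1] by simp

lemma rat_mod_uminus: assumes "pint CARD('p::prime_card) x"
  shows "(rat_mod (- x) :: 'p mod_ring) = - rat_mod x"
  using rat_mod_mult[OF pint_of_int[of "-1"] assms] rat_mod_of_int[where 'p='p, of "-1"] by simp

lemma rat_mod_diff: assumes "pint CARD('p::prime_card) x" "pint CARD('p) y"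
  shows "(rat_mod (x - y) :: 'p mod_ring) = rat_mod x - rat_mod y"
  using rat_mod_add[OF assms(1) pint_uminus[OF assms(2)]] rat_mod_uminus[OF assms(2)] by simp

lemma pint_div_p:
  assumes "pint CARD('p::prime_card) (of_nat CARD('p) * y)"
    and "(rat_mod (of_nat CARD('p) * y) :: 'p mod_ring) = 0"
  shows "pint CARD('p) y"
proof -
  obtain a b where ab: "of_nat CARD('p) * y = of_int a / of_int b" "\<not> int CARD('p) dvd b"
    using assms(1) unfolding pint_def by blast
  have "(of_int a / of_int b :: 'p mod_ring) = 0" using rat_mod_rep[OF ab] assms(2) by simp
  moreover have "(of_int b :: 'p mod_ring) \<noteq> 0" using ab(2) by (simp add: ofint_modring_zero)
  ultimately have "(of_int a :: 'p mod_ring) = 0" by simp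
  then have "int CARD('p) dvd a" by (simp add: ofint_modring_zero)
  then obtain k where k: "a = int CARD('p) * k" by blast
  have P0: "(of_nat CARD('p) :: rat) \<noteq> 0" by simp
  have "of_nat CARD('p) * y = of_nat CARD('p) * (of_int k / of_int b)" using ab(1) k by simp
  then have "y = of_int k / of_int b" using mult_left_cancel[OF P0] by blast
  then show ?thesis using ab(2) unfolding pint_def by blast
qed

lemma pint_exp_single:
  "\<forall>x. (\<exists>a b. b \<noteq> 0 \<and> x = of_int a / of_int b \<and> nat \<bar>b\<bar> = n) \<longrightarrow>
     (\<exists>e. pint CARD('p::prime_card) (of_nat CARD('p) ^ e * x))"
proof (induction n rule: less_induct)
  case (less n)
  show ?case
  proof (intro allI impI)
    fix x :: rat
    assume "\<exists>a b. b \<noteq> 0 \<and> x = of_int a / of_int b \<and> nat \<bar>b\<bar> = n"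
    then obtain a b where ab: "b \<noteq> 0" "x = of_int a / of_int b" "nat \<bar>b\<bar> = n" by blast
    show "\<exists>e. pint CARD('p) (of_nat CARD('p) ^ e * x)"
    proof (cases "int CARD('p) dvd b")
      case False
      then have "pint CARD('p) x" using ab unfolding pint_def by blast
      then show ?thesis by (intro exI[of _ 0]) simp
    next
      case True
      then obtain b1 where b1: "b = int CARD('p) * b1" by blast
      have b1nz: "b1 \<noteq> 0" using ab(1) b1 by simp
      have P2: "int CARD('p) \<ge> 2" using prime_P[where 'p='p] prime_ge_2_int by blast
      have "\<bar>b\<bar> = int CARD('p) * \<bar>b1\<bar>" using b1 by (simp add: abs_mult)
      moreover have "1 * \<bar>b1\<bar> < int CARD('p) * \<bar>b1\<bar>"
        using P2 b1nz by (intro mult_strict_right_mono) auto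
      ultimately have "\<bar>b1\<bar> < \<bar>b\<bar>" by simp
      then have lt: "nat \<bar>b1\<bar> < n" using ab(3) by simp
      have "of_nat CARD('p) * x = of_int a / of_int b1" using ab(2) b1 b1nz by (simp add: field_simps)
      then obtain e where "pint CARD('p) (of_nat CARD('p) ^ e * (of_nat CARD('p) * x))"
        using less[OF lt] b1nz by blast
      then have "pint CARD('p) (of_nat CARD('p) ^ Suc e * x)" by (simp add: mult.assoc mult.commute mult.left_commute)
      then show ?thesis by blast
    qed
  qed
qed

lemma pint_exp_mono:
  assumes "pint CARD('p::prime_card) (of_nat CARD('p) ^ e * x)"
  shows "pint CARD('p) (of_nat CARD('p) ^ (e + d) * x)"
proof -
  have "(of_nat CARD('p) ^ (e + d) * x :: rat) = of_int (int CARD('p) ^ d) * (of_nat CARD('p) ^ e * x)"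
    by (simp add: power_add)
  then show ?thesis using pint_mult[OF pint_of_int[where 'p='p, of "int CARD('p) ^ d"] assms] by metis
qed

lemma pint_exp_exists:
  "finite X \<Longrightarrow> \<exists>e. \<forall>x\<in>X. pint CARD('p::prime_card) (of_nat CARD('p) ^ e * x)"
proof (induction X rule: finite_induct)
  case empty then show ?case by simp
next
  case (insert x X)
  then obtain e where e: "\<forall>y\<in>X. pint CARD('p) (of_nat CARD('p) ^ e * y)" by blast
  obtain a b where q: "quotient_of x = (a, b)" by (cases "quotient_of x")
  have "b \<noteq> 0" using quotient_of_denom_pos[OF q] by simp
  then obtain e' where e': "pint CARD('p) (of_nat CARD('p) ^ e' * x)"
    using pint_exp_single[where 'p='p, of "nat \<bar>b\<bar>"] quotient_of_div[OF q] by blast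
  have "\<forall>y\<in>insert x X. pint CARD('p) (of_nat CARD('p) ^ (e + e') * y)"
    using e e' pint_exp_mono[where 'p='p] by (metis add.commute insert_iff)
  then show ?case by blast
qed

lemma scale_exists:
  fixes X :: "rat set"
  assumes "finite X" "1 \<in> X"
  shows "\<exists>m::int. (\<forall>x\<in>X. pint CARD('p::prime_card) (of_int m * x)) \<and>
     (\<exists>x\<in>X. (rat_mod (of_int m * x) :: 'p mod_ring) \<noteq> 0)"
proof -
  define E where "E = {e. \<forall>x\<in>X. pint CARD('p) (of_nat CARD('p) ^ e * x)}"
  obtain e1 where "e1 \<in> E" using pint_exp_exists[OF assms(1)] unfolding E_def by blast
  define e0 where "e0 = (LEAST e. e \<in> E)"
  have e0E: "e0 \<in> E" unfolding e0_def using \<open>e1 \<in> E\<close> by (rule LeastI)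
  define m where "m = int CARD('p) ^ e0"
  have mm: "(of_int m :: rat) = of_nat CARD('p) ^ e0" unfolding m_def by simp
  have A: "\<forall>x\<in>X. pint CARD('p) (of_int m * x)" using e0E unfolding E_def mm by blast
  have B: "\<exists>x\<in>X. (rat_mod (of_int m * x) :: 'p mod_ring) \<noteq> 0"
  proof (cases e0)
    case 0
    then have "(rat_mod (of_int m * 1) :: 'p mod_ring) = 1" unfolding m_def using rat_mod_1 by simp
    then show ?thesis using assms(2) by (intro bexI[of _ 1]) simp_all
  next
    case (Suc e')
    have "e' \<notin> E" using Suc unfolding e0_def by (metis Suc_n_not_le_n Least_le)
    then obtain x where x: "x \<in> X" "\<not> pint CARD('p) (of_nat CARD('p) ^ e' * x)" unfolding E_def by blast
    have eq: "(of_int m * x :: rat) = of_nat CARD('p) * (of_nat CARD('p) ^ e' * x)"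
      unfolding mm Suc by simp
    have "pint CARD('p) (of_int m * x)" using A x(1) by blast
    then have "(rat_mod (of_int m * x) :: 'p mod_ring) \<noteq> 0"
      using pint_div_p[where 'p='p, of "of_nat CARD('p) ^ e' * x"] x(2) unfolding eq by blast
    then show ?thesis using x(1) by blast
  qed
  show ?thesis using A B by blast
qed



definition pintP :: "nat \<Rightarrow> ('v, rat) mpoly \<Rightarrow> bool" where
  "pintP P F \<longleftrightarrow> (\<forall>k. pint P (Poly_Mapping.lookup F k))"

lemma lookup_pi: "Poly_Mapping.lookup (pi_mod F :: ('v, 'p::prime_card mod_ring) mpoly) k = rat_mod (Poly_Mapping.lookup F k)"
  unfolding pi_mod_def map.rep_eq by (simp add: when_def rat_mod_0)

lemma keys_pi: "Poly_Mapping.keys (pi_mod F :: ('v, 'p::prime_card mod_ring) mpoly) \<subseteq> Poly_Mapping.keys F"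
  by (auto simp: in_keys_iff lookup_pi rat_mod_0)

lemma pi_0: "(pi_mod 0 :: ('v, 'p::prime_card mod_ring) mpoly) = 0"
  by (rule poly_mapping_eqI) (simp add: lookup_pi rat_mod_0)

lemma pintP_0: "pintP CARD('p::prime_card) 0" unfolding pintP_def using pint_0[where 'p='p] by simp

lemma pintP_add: "pintP CARD('p::prime_card) F \<Longrightarrow> pintP CARD('p) H \<Longrightarrow> pintP CARD('p) (F + H)"
  unfolding pintP_def by (simp add: lookup_add pint_add)

lemma pintP_diff: "pintP CARD('p::prime_card) F \<Longrightarrow> pintP CARD('p) H \<Longrightarrow> pintP CARD('p) (F - H)"
  unfolding pintP_def by (simp add: lookup_minus pint_diff)

lemma pintP_single_mult:
  assumes "pint CARD('p::prime_card) c" "pintP CARD('p) F"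
  shows "pintP CARD('p) (Poly_Mapping.single u c * F)"
  unfolding pintP_def lookup_single_mult using assms pint_0[where 'p='p] pint_mult[where 'p='p] unfolding pintP_def by simp

lemma pi_add: "pintP CARD('p::prime_card) F \<Longrightarrow> pintP CARD('p) H \<Longrightarrow>
    (pi_mod (F + H) :: ('v, 'p mod_ring) mpoly) = pi_mod F + pi_mod H"
  by (rule poly_mapping_eqI) (simp add: lookup_pi lookup_add rat_mod_add pintP_def)

lemma pi_diff: "pintP CARD('p::prime_card) F \<Longrightarrow> pintP CARD('p) H \<Longrightarrow>
    (pi_mod (F - H) :: ('v, 'p mod_ring) mpoly) = pi_mod F - pi_mod H"
  by (rule poly_mapping_eqI) (simp add: lookup_pi lookup_minus rat_mod_diff pintP_def)

lemma pi_single_mult: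
  assumes "pint CARD('p::prime_card) c" "pintP CARD('p) F"
  shows "(pi_mod (Poly_Mapping.single u c * F) :: ('v, 'p mod_ring) mpoly) =
    Poly_Mapping.single u (rat_mod c) * pi_mod F"
proof (rule poly_mapping_eqI)
  fix k
  show "Poly_Mapping.lookup (pi_mod (Poly_Mapping.single u c * F) :: ('v, 'p mod_ring) mpoly) k =
    Poly_Mapping.lookup (Poly_Mapping.single u (rat_mod c) * pi_mod F) k"
    unfolding lookup_pi lookup_single_mult
    using assms rat_mod_mult[where 'p='p, of c] rat_mod_0[where 'p='p] unfolding pintP_def by simp
qed

lemma pi_keys_lterm:
  assumes to: "term_order ord" and "t \<in> Poly_Mapping.keys (pi_mod F :: ('v, 'p::prime_card mod_ring) mpoly)"
    and "\<forall>s\<in>Poly_Mapping.keys F. ord s t"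
  shows "lterm ord (pi_mod F :: ('v, 'p mod_ring) mpoly) = t"
  using lterm_eqI[OF to assms(2)] assms(3) keys_pi[where 'p='p, of F] by blast

lemma core_aux:
  fixes I :: "('v::finite, rat) mpoly set"
  assumes to: "term_order ord" and id: "is_ideal I" and gb: "is_GB ord I G"
    and mon: "\<forall>g\<in>G. lcoeff ord g = 1" and pg: "\<forall>g\<in>G. pintP CARD('p::prime_card) g"
  shows "\<forall>F. F \<in> I \<and> pintP CARD('p) F \<and> F \<noteq> 0 \<and> lterm ord F = t \<longrightarrow>
    (pi_mod F :: ('v, 'p mod_ring) mpoly) \<in> ideal_gen (pi_mod ` G) \<and>
    ((pi_mod F :: ('v, 'p mod_ring) mpoly) \<noteq> 0 \<longrightarrow>
       (\<exists>g\<in>G. pp_dvd (lterm ord g) (lterm ord (pi_mod F :: ('v, 'p mod_ring) mpoly))))"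
proof (induction t rule: wf_induct_to[OF to])
  case (1 t)
  have GI: "G \<subseteq> I" and gbp: "\<forall>f\<in>I. f \<noteq> 0 \<longrightarrow> (\<exists>g\<in>G. pp_dvd (lterm ord g) (lterm ord f))"
    using gb unfolding is_GB_def by blast+
  have gnz: "g \<in> G \<Longrightarrow> g \<noteq> 0" for g using gb unfolding is_GB_def by blast
  let ?I = "ideal_gen (pi_mod ` G) :: ('v, 'p mod_ring) mpoly set"
  have idI: "is_ideal ?I" by (rule ideal_gen_ideal)
  show ?case
  proof (intro allI impI)
    fix F :: "('v, rat) mpoly"
    assume F: "F \<in> I \<and> pintP CARD('p) F \<and> F \<noteq> 0 \<and> lterm ord F = t"
    then have FI: "F \<in> I" and Fp: "pintP CARD('p) F" and Fnz: "F \<noteq> 0" and Ft: "lterm ord F = t" by auto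
    obtain g where g: "g \<in> G" "pp_dvd (lterm ord g) t" using gbp FI Fnz Ft by blast
    define u where "u = t - lterm ord g"
    have tu: "t = u + lterm ord g" unfolding u_def using pp_dvd_decomp[OF g(2)] by (simp add: add.commute)
    define c where "c = lcoeff ord F"
    have cnz: "c \<noteq> 0" unfolding c_def using lcoeff_nz[OF to Fnz] .
    have cp: "pint CARD('p) c" using Fp unfolding pintP_def c_def lcoeff_def by blast
    have gp: "pintP CARD('p) g" using pg g(1) by blast
    have g1: "Poly_Mapping.lookup g (lterm ord g) = 1" using mon g(1) unfolding lcoeff_def by blast
    define M where "M = Poly_Mapping.single u c * g"
    define F' where "F' = F - M"
    have F'I: "F' \<in> I" unfolding F'_def M_def using ideal_diff[OF id FI ideal_mult[OF id, of g]] GI g(1) by blast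
    have Mp: "pintP CARD('p) M" unfolding M_def using pintP_single_mult[OF cp gp] .
    have F'p: "pintP CARD('p) F'" unfolding F'_def using pintP_diff[OF Fp Mp] .
    have lF't: "Poly_Mapping.lookup F' t = 0"
      unfolding F'_def M_def lookup_minus tu lookup_single_mult_add using g1 c_def Ft tu
      unfolding lcoeff_def by simp
    have kM: "Poly_Mapping.keys M = (\<lambda>k. u + k) ` Poly_Mapping.keys g"
      unfolding M_def using keys_single_mult[OF cnz] .
    have kF: "s \<in> Poly_Mapping.keys F \<Longrightarrow> ord s t" for s using lterm_props(2)[OF to Fnz] Ft by blast
    have kMt: "s \<in> Poly_Mapping.keys M \<Longrightarrow> ord s t" for s
      unfolding kM tu using lterm_props(2)[OF to gnz[OF g(1)]] to_mono'[OF to] by blast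
    have kF'sub: "Poly_Mapping.keys F' \<subseteq> Poly_Mapping.keys F \<union> Poly_Mapping.keys M"
      unfolding F'_def by (rule keys_diff_sub)
    have F'lt: "F' \<noteq> 0 \<Longrightarrow> strict_of ord (lterm ord F') t"
    proof -
      assume nz: "F' \<noteq> 0"
      have "lterm ord F' \<in> Poly_Mapping.keys F'" using lterm_props(1)[OF to nz] .
      then have "ord (lterm ord F') t" "lterm ord F' \<noteq> t" using kF'sub kF kMt lF't by (auto simp: in_keys_iff)
      then show ?thesis by (simp add: strict_of_def)
    qed
    have IH: "F' \<noteq> 0 \<Longrightarrow> (pi_mod F' :: ('v, 'p mod_ring) mpoly) \<in> ?I \<and>
        ((pi_mod F' :: ('v, 'p mod_ring) mpoly) \<noteq> 0 \<longrightarrow>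
         (\<exists>g\<in>G. pp_dvd (lterm ord g) (lterm ord (pi_mod F' :: ('v, 'p mod_ring) mpoly))))"
      using 1[OF F'lt] F'I F'p by blast
    have piF': "(pi_mod F' :: ('v, 'p mod_ring) mpoly) \<in> ?I"
    proof (cases "F' = 0")
      case True
      have "(pi_mod F' :: ('v, 'p mod_ring) mpoly) = 0" unfolding True by (rule pi_0)
      then show ?thesis using ideal_0[OF idI] by simp
    next
      case False then show ?thesis using IH by blast
    qed
    have FF': "F = F' + M" unfolding F'_def by simp
    have piF: "(pi_mod F :: ('v, 'p mod_ring) mpoly) = pi_mod F' + Poly_Mapping.single u (rat_mod c) * pi_mod g"
      unfolding FF' pi_add[OF F'p Mp] unfolding M_def pi_single_mult[OF cp gp] ..
    have pig: "(pi_mod g :: ('v, 'p mod_ring) mpoly) \<in> ?I" using g(1) ideal_gen_sub by blast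
    have part1: "(pi_mod F :: ('v, 'p mod_ring) mpoly) \<in> ?I"
      unfolding piF using ideal_add[OF idI piF' ideal_mult[OF idI pig]] .
    have part2: "(pi_mod F :: ('v, 'p mod_ring) mpoly) \<noteq> 0 \<Longrightarrow>
       (\<exists>g\<in>G. pp_dvd (lterm ord g) (lterm ord (pi_mod F :: ('v, 'p mod_ring) mpoly)))"
    proof -
      assume pnz: "(pi_mod F :: ('v, 'p mod_ring) mpoly) \<noteq> 0"
      show ?thesis
      proof (cases "(rat_mod c :: 'p mod_ring) = 0")
        case False
        have "Poly_Mapping.lookup (pi_mod F :: ('v, 'p mod_ring) mpoly) t = rat_mod c"
          unfolding lookup_pi c_def lcoeff_def Ft ..
        then have "t \<in> Poly_Mapping.keys (pi_mod F :: ('v, 'p mod_ring) mpoly)" using False by (simp add: in_keys_iff)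
        then have "lterm ord (pi_mod F :: ('v, 'p mod_ring) mpoly) = t" using pi_keys_lterm[OF to] kF by blast
        then show ?thesis using g by auto
      next
        case True
        then have e: "(pi_mod F :: ('v, 'p mod_ring) mpoly) = pi_mod F'" unfolding piF by simp
        then have "F' \<noteq> 0" using pnz pi_0[where 'p='p] by metis
        then show ?thesis using IH e pnz by simp
      qed
    qed
    show "(pi_mod F :: ('v, 'p mod_ring) mpoly) \<in> ?I \<and>
      ((pi_mod F :: ('v, 'p mod_ring) mpoly) \<noteq> 0 \<longrightarrow>
       (\<exists>g\<in>G. pp_dvd (lterm ord g) (lterm ord (pi_mod F :: ('v, 'p mod_ring) mpoly))))"
      using part1 part2 by blast
  qed
qed

lemma core:
  fixes I :: "('v::finite, rat) mpoly set"
  assumes to: "term_order ord" and id: "is_ideal I" and gb: "is_GB ord I G"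
    and mon: "\<forall>g\<in>G. lcoeff ord g = 1" and pg: "\<forall>g\<in>G. pintP CARD('p::prime_card) g"
    and F: "F \<in> I" "pintP CARD('p) F"
  shows "(pi_mod F :: ('v, 'p mod_ring) mpoly) \<in> ideal_gen (pi_mod ` G)"
    and "(pi_mod F :: ('v, 'p mod_ring) mpoly) \<noteq> 0 \<Longrightarrow>
       (\<exists>g\<in>G. pp_dvd (lterm ord g) (lterm ord (pi_mod F :: ('v, 'p mod_ring) mpoly)))"
proof -
  have "(pi_mod F :: ('v, 'p mod_ring) mpoly) \<in> ideal_gen (pi_mod ` G) \<and>
       ((pi_mod F :: ('v, 'p mod_ring) mpoly) \<noteq> 0 \<longrightarrow>
       (\<exists>g\<in>G. pp_dvd (lterm ord g) (lterm ord (pi_mod F :: ('v, 'p mod_ring) mpoly))))"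
  proof (cases "F = 0")
    case True
    have "(pi_mod F :: ('v, 'p mod_ring) mpoly) = 0" unfolding True by (rule pi_0)
    then show ?thesis using ideal_0[OF ideal_gen_ideal] by simp
  next
    case False
    then show ?thesis using core_aux[OF to id gb mon pg, of "lterm ord F"] F by blast
  qed
  then show "(pi_mod F :: ('v, 'p mod_ring) mpoly) \<in> ideal_gen (pi_mod ` G)"
    and "(pi_mod F :: ('v, 'p mod_ring) mpoly) \<noteq> 0 \<Longrightarrow>
       (\<exists>g\<in>G. pp_dvd (lterm ord g) (lterm ord (pi_mod F :: ('v, 'p mod_ring) mpoly)))" by blast+
qed

lemma poly_induct:
  assumes "P 0" "\<And>k c h. P h \<Longrightarrow> P (Poly_Mapping.single k c + h)"
  shows "P (h :: 'a \<Rightarrow>\<^sub>0 'b::ab_group_add)"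
proof (induction "card (Poly_Mapping.keys h)" arbitrary: h)
  case 0
  then have "Poly_Mapping.keys h = {}" by simp
  then have "h = 0" by simp
  then show ?case using assms(1) by simp
next
  case (Suc n)
  then have "Poly_Mapping.keys h \<noteq> {}" by auto
  then obtain k where k: "k \<in> Poly_Mapping.keys h" by blast
  define h' where "h' = h - Poly_Mapping.single k (Poly_Mapping.lookup h k)"
  have "Poly_Mapping.keys h' = Poly_Mapping.keys h - {k}"
    unfolding h'_def by (auto simp: in_keys_iff lookup_minus lookup_single when_def split: if_splits)
  then have "n = card (Poly_Mapping.keys h')" using Suc(2) k by simp
  then have "P h'" using Suc(1) by blast
  then have "P (Poly_Mapping.single k (Poly_Mapping.lookup h k) + h')" using assms(2) by blast
  moreover have "Poly_Mapping.single k (Poly_Mapping.lookup h k) + h' = h" unfolding h'_def by simp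
  ultimately show ?case by simp
qed

definition Jq :: "('v, rat) mpoly set \<Rightarrow> ('v, 'p::prime_card mod_ring) mpoly set" where
  "Jq I = {pi_mod F | F. F \<in> I \<and> pintP CARD('p) F}"

lemma Jq_ideal:
  fixes I :: "('v, rat) mpoly set"
  assumes id: "is_ideal I"
  shows "is_ideal (Jq I :: ('v, 'p::prime_card mod_ring) mpoly set)"
proof -
  have z0: "(pi_mod (0 :: ('v, rat) mpoly) :: ('v, 'p mod_ring) mpoly) = 0" by (rule pi_0)
  have "\<exists>F. (0 :: ('v, 'p mod_ring) mpoly) = pi_mod F \<and> F \<in> I \<and> pintP CARD('p) F"
    using z0 ideal_0[OF id] pintP_0[where 'p='p] by (intro exI[of _ 0]) simp
  then have z: "(0 :: ('v, 'p mod_ring) mpoly) \<in> Jq I" unfolding Jq_def by simp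
  have a: "f + g \<in> Jq I" if hfg: "f \<in> Jq I" "g \<in> Jq I" for f g :: "('v, 'p mod_ring) mpoly"
  proof -
    obtain F where F: "f = pi_mod F" "F \<in> I" "pintP CARD('p) F" using hfg(1) unfolding Jq_def by blast
    obtain G where G: "g = pi_mod G" "G \<in> I" "pintP CARD('p) G" using hfg(2) unfolding Jq_def by blast
    note FG = F G
    have "f + g = pi_mod (F + G)" using FG pi_add[where 'p='p, of F G] by simp
    moreover have "F + G \<in> I" using ideal_add[OF id] FG by blast
    moreover have "pintP CARD('p) (F + G)" using pintP_add FG by blast
    ultimately show ?thesis unfolding Jq_def by blast
  qed
  have m: "h * f \<in> Jq I" if hf: "f \<in> Jq I" for f h :: "('v, 'p mod_ring) mpoly"
  proof -
    obtain F where F: "f = pi_mod F" "F \<in> I" "pintP CARD('p) F" using hf unfolding Jq_def by blast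
    show ?thesis
    proof (induction h rule: poly_induct)
      case 1 show ?case using z by simp
    next
      case (2 k c h)
      define mm where "mm = to_int_mod_ring c"
      have cm: "(of_int mm :: 'p mod_ring) = c" unfolding mm_def
        by (simp add: of_int_of_int_mod_ring)
      have "Poly_Mapping.single k c * f = pi_mod (Poly_Mapping.single k (of_int mm) * F)"
        using pi_single_mult[OF pint_of_int F(3), of k] rat_mod_of_int[where 'p='p, of mm] cm F(1) by simp
      moreover have "Poly_Mapping.single k (of_int mm) * F \<in> I" using ideal_mult[OF id F(2)] .
      moreover have "pintP CARD('p) (Poly_Mapping.single k (of_int mm) * F)"
        using pintP_single_mult[OF pint_of_int F(3)] .
      ultimately have "Poly_Mapping.single k c * f \<in> Jq I" unfolding Jq_def by blast
      then have "Poly_Mapping.single k c * f + h * f \<in> Jq I" using a 2 by blast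
      then show ?case by (simp add: distrib_right)
    qed
  qed
  show ?thesis unfolding is_ideal_def using z a m by blast
qed

lemma ideal_gen_pi_sub_Jq:
  fixes I :: "('v, rat) mpoly set"
  assumes id: "is_ideal I" and "G \<subseteq> I" and "\<forall>g\<in>G. pintP CARD('p::prime_card) g"
  shows "ideal_gen (pi_mod ` G) \<subseteq> (Jq I :: ('v, 'p mod_ring) mpoly set)"
proof (rule ideal_gen_least[OF Jq_ideal[OF id]])
  show "pi_mod ` G \<subseteq> (Jq I :: ('v, 'p mod_ring) mpoly set)" unfolding Jq_def using assms(2,3) by blast
qed



lemma good_pintP:
  assumes "good ord I CARD('p::prime_card)" "g \<in> reduced_GB ord I"
  shows "pintP CARD('p) g"
  unfolding pintP_def
proof
  fix k
  show "pint CARD('p) (Poly_Mapping.lookup g k)"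
  proof (cases "k \<in> Poly_Mapping.keys g")
    case False
    then have "Poly_Mapping.lookup g k = 0" by (simp add: in_keys_iff)
    then show ?thesis using pint_0[where 'p='p] by simp
  next
    case True
    let ?x = "snd (quotient_of (Poly_Mapping.lookup g k))"
    have "?x \<in> (\<lambda>c. snd (quotient_of c)) ` Poly_Mapping.lookup g ` Poly_Mapping.keys g" using True by blast
    then have "?x dvd den_poly g" unfolding den_poly_def by (rule dvd_Lcm)
    moreover have "den_poly g dvd den_set (reduced_GB ord I)" unfolding den_set_def using assms(2) by (intro dvd_Lcm) blast
    ultimately have "?x dvd den_set (reduced_GB ord I)" by (rule dvd_trans)
    then have "\<not> int CARD('p) dvd ?x" using assms(1) unfolding good_def using dvd_trans by blast
    then show ?thesis by (rule pint_quot)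
  qed
qed

lemma Q_side:
  fixes I :: "('v::finite, rat) mpoly set"
  assumes tos: "term_order \<sigma>" and tot: "term_order \<tau>" and id: "is_ideal I"
    and gs: "good \<sigma> I CARD('q::prime_card)" and gt: "good \<tau> I CARD('q)"
  shows "MinLT \<tau> (red_ideal \<sigma> I :: ('v, 'q mod_ring) mpoly set) = lterm \<tau> ` reduced_GB \<tau> I"
proof -
  define Gs where "Gs = reduced_GB \<sigma> I"
  define Gt where "Gt = reduced_GB \<tau> I"
  have rs: "is_reduced_GB \<sigma> I Gs" unfolding Gs_def using reduced_GB_props[OF tos id] .
  have rt: "is_reduced_GB \<tau> I Gt" unfolding Gt_def using reduced_GB_props[OF tot id] .
  have GBs: "is_GB \<sigma> I Gs" "\<forall>g\<in>Gs. lcoeff \<sigma> g = 1" using rs unfolding is_reduced_GB_def by blast+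
  have GBt: "is_GB \<tau> I Gt" "\<forall>g\<in>Gt. lcoeff \<tau> g = 1" using rt unfolding is_reduced_GB_def by blast+
  have GsI: "Gs \<subseteq> I" using GBs(1) unfolding is_GB_def by blast
  have GtI: "Gt \<subseteq> I" "0 \<notin> Gt" using GBt(1) unfolding is_GB_def by blast+
  have ps: "\<forall>g\<in>Gs. pintP CARD('q) g" using good_pintP[OF gs] unfolding Gs_def by blast
  have pt: "\<forall>g\<in>Gt. pintP CARD('q) g" using good_pintP[OF gt] unfolding Gt_def by blast
  let ?Iq = "red_ideal \<sigma> I :: ('v, 'q mod_ring) mpoly set"
  have Iq: "?Iq = ideal_gen (pi_mod ` Gs)" unfolding red_ideal_def Gs_def ..
  have mint: "is_minimal_GB \<tau> I Gt" using reduced_is_minimal[OF tot rt] .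
  have mn: "\<forall>g\<in>Gt. \<forall>g'\<in>Gt. g \<noteq> g' \<longrightarrow> \<not> pp_dvd (lterm \<tau> g) (lterm \<tau> g')"
    using mint unfolding is_minimal_GB_def by blast
  have piGt: "(pi_mod g :: ('v, 'q mod_ring) mpoly) \<in> ?Iq \<and> (pi_mod g :: ('v, 'q mod_ring) mpoly) \<noteq> 0 \<and>
      lterm \<tau> (pi_mod g :: ('v, 'q mod_ring) mpoly) = lterm \<tau> g" if g: "g \<in> Gt" for g
  proof -
    have gI: "g \<in> I" using GtI g by blast
    have gp: "pintP CARD('q) g" using pt g by blast
    have "(pi_mod g :: ('v, 'q mod_ring) mpoly) \<in> ideal_gen (pi_mod ` Gs)"
      using core(1)[OF tos id GBs(1) GBs(2) ps gI gp] .
    then have A: "(pi_mod g :: ('v, 'q mod_ring) mpoly) \<in> ?Iq" using Iq by simp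
    have gnz: "g \<noteq> 0" using GtI(2) g by blast
    have "Poly_Mapping.lookup (pi_mod g :: ('v, 'q mod_ring) mpoly) (lterm \<tau> g) = 1"
      unfolding lookup_pi using GBt(2) g rat_mod_1 unfolding lcoeff_def by simp
    then have tk: "lterm \<tau> g \<in> Poly_Mapping.keys (pi_mod g :: ('v, 'q mod_ring) mpoly)" by (simp add: in_keys_iff)
    then have B: "(pi_mod g :: ('v, 'q mod_ring) mpoly) \<noteq> 0" by auto
    have C: "lterm \<tau> (pi_mod g :: ('v, 'q mod_ring) mpoly) = lterm \<tau> g"
      using pi_keys_lterm[OF tot tk] lterm_props(2)[OF tot gnz] by blast
    show ?thesis using A B C by blast
  qed
  have ltsq: "\<exists>g\<in>Gt. pp_dvd (lterm \<tau> g) (lterm \<tau> f)" if f: "f \<in> ?Iq" "f \<noteq> 0" for f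
  proof -
    have "?Iq \<subseteq> Jq I" unfolding Iq using ideal_gen_pi_sub_Jq[OF id GsI ps] .
    then obtain F where F: "f = pi_mod F" "F \<in> I" "pintP CARD('q) F" using f(1) unfolding Jq_def by blast
    show ?thesis using core(2)[OF tot id GBt(1) GBt(2) pt F(2) F(3)] f(2) F(1) by blast
  qed
  have sub1: "MinLT \<tau> ?Iq \<subseteq> lterm \<tau> ` Gt"
    proof (rule subsetI)
      fix s assume s: "s \<in> MinLT \<tau> ?Iq"
      then obtain f where f: "f \<in> ?Iq" "f \<noteq> 0" "s = lterm \<tau> f" unfolding MinLT_def LTS_def by blast
      obtain g where g0: "g \<in> Gt" "pp_dvd (lterm \<tau> g) (lterm \<tau> f)" using ltsq[OF f(1) f(2)] by blast
      have g: "g \<in> Gt" "pp_dvd (lterm \<tau> g) s" using g0 f(3) by simp_all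
      have "\<exists>h. lterm \<tau> g = lterm \<tau> h \<and> h \<in> ?Iq \<and> h \<noteq> 0" using piGt[OF g(1)]
        by (intro exI[of _ "pi_mod g :: ('v, 'q mod_ring) mpoly"]) simp
      then have "lterm \<tau> g \<in> LTS \<tau> ?Iq" unfolding LTS_def by simp
      then have "lterm \<tau> g = s" using s g(2) unfolding MinLT_def by blast
      then show "s \<in> lterm \<tau> ` Gt" using g(1) by blast
    qed
  have sub2: "lterm \<tau> ` Gt \<subseteq> MinLT \<tau> ?Iq"
    proof (rule subsetI)
      fix t assume "t \<in> lterm \<tau> ` Gt"
      then obtain g where g: "g \<in> Gt" "t = lterm \<tau> g" by blast
      have "\<exists>h. t = lterm \<tau> h \<and> h \<in> ?Iq \<and> h \<noteq> 0" using piGt[OF g(1)] g(2)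
        by (intro exI[of _ "pi_mod g :: ('v, 'q mod_ring) mpoly"]) simp
      then have tL: "t \<in> LTS \<tau> ?Iq" unfolding LTS_def by simp
      have "s' = t" if hs: "s' \<in> LTS \<tau> ?Iq" "pp_dvd s' t" for s'
      proof -
        obtain f where f: "f \<in> ?Iq" "f \<noteq> 0" "s' = lterm \<tau> f" using hs(1) unfolding LTS_def by blast
        obtain g' where g0: "g' \<in> Gt" "pp_dvd (lterm \<tau> g') (lterm \<tau> f)" using ltsq[OF f(1) f(2)] by blast
        have g': "g' \<in> Gt" "pp_dvd (lterm \<tau> g') s'" using g0 f(3) by simp_all
        then have "pp_dvd (lterm \<tau> g') (lterm \<tau> g)" using hs(2) g(2) pp_dvd_trans by blast
        then have "g' = g" using mn g(1) g'(1) by blast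
        then show "s' = t" using g' hs(2) g(2) pp_dvd_antisym by blast
      qed
      then show "t \<in> MinLT \<tau> ?Iq" using tL unfolding MinLT_def by blast
    qed
  show ?thesis using sub1 sub2 unfolding Gt_def by (rule equalityI)
qed

lemma P_side:
  fixes I :: "('v::finite, rat) mpoly set"
  assumes tos: "term_order \<sigma>" and tot: "term_order \<tau>" and id: "is_ideal I"
    and gs: "good \<sigma> I CARD('p::prime_card)" and g: "g \<in> reduced_GB \<tau> I"
  shows "\<exists>f \<in> (red_ideal \<sigma> I :: ('v, 'p mod_ring) mpoly set). f \<noteq> 0 \<and> Poly_Mapping.keys f \<subseteq> Poly_Mapping.keys g"
proof -
  define Gs where "Gs = reduced_GB \<sigma> I"
  have rs: "is_reduced_GB \<sigma> I Gs" unfolding Gs_def using reduced_GB_props[OF tos id] .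
  have rt: "is_reduced_GB \<tau> I (reduced_GB \<tau> I)" using reduced_GB_props[OF tot id] .
  have GBs: "is_GB \<sigma> I Gs" "\<forall>g\<in>Gs. lcoeff \<sigma> g = 1" using rs unfolding is_reduced_GB_def by blast+
  have ps: "\<forall>g\<in>Gs. pintP CARD('p) g" using good_pintP[OF gs] unfolding Gs_def by blast
  have gI: "g \<in> I" and gnz: "g \<noteq> 0" and g1: "lcoeff \<tau> g = 1"
    using rt g unfolding is_reduced_GB_def is_GB_def by blast+
  define X where "X = Poly_Mapping.lookup g ` Poly_Mapping.keys g"
  have fX: "finite X" unfolding X_def by simp
  have "lterm \<tau> g \<in> Poly_Mapping.keys g" using lterm_props(1)[OF tot gnz] .
  then have X1: "1 \<in> X" unfolding X_def using g1 unfolding lcoeff_def by (metis imageI)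
  obtain m where m: "\<forall>x\<in>X. pint CARD('p) (of_int m * x)"
      "\<exists>x\<in>X. (rat_mod (of_int m * x) :: 'p mod_ring) \<noteq> 0"
    using scale_exists[where 'p='p, OF fX X1] by blast
  define F where "F = Poly_Mapping.single 0 (of_int m) * g"
  have lF: "Poly_Mapping.lookup F k = of_int m * Poly_Mapping.lookup g k" for k
    unfolding F_def using lookup_single_mult_add[of 0 "of_int m" g k] by simp
  have FI: "F \<in> I" unfolding F_def using ideal_mult[OF id gI] .
  have Fp: "pintP CARD('p) F" unfolding pintP_def
  proof
    fix k
    show "pint CARD('p) (Poly_Mapping.lookup F k)"
    proof (cases "k \<in> Poly_Mapping.keys g")
      case True then show ?thesis using m(1) unfolding lF X_def by blast
    next
      case False then show ?thesis unfolding lF using pint_0[where 'p='p] by (simp add: in_keys_iff)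
    qed
  qed
  have piI: "(pi_mod F :: ('v, 'p mod_ring) mpoly) \<in> ideal_gen (pi_mod ` Gs)"
    using core(1)[OF tos id GBs(1) GBs(2) ps FI Fp] .
  have nz: "(pi_mod F :: ('v, 'p mod_ring) mpoly) \<noteq> 0"
  proof -
    obtain k where k: "k \<in> Poly_Mapping.keys g" "(rat_mod (of_int m * Poly_Mapping.lookup g k) :: 'p mod_ring) \<noteq> 0"
      using m(2) unfolding X_def by blast
    have "Poly_Mapping.lookup (pi_mod F :: ('v, 'p mod_ring) mpoly) k \<noteq> 0" unfolding lookup_pi lF using k(2) .
    then show ?thesis by auto
  qed
  have ks: "Poly_Mapping.keys (pi_mod F :: ('v, 'p mod_ring) mpoly) \<subseteq> Poly_Mapping.keys g"
  proof -
    have "Poly_Mapping.keys F \<subseteq> Poly_Mapping.keys g" by (auto simp: in_keys_iff lF)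
    then show ?thesis using keys_pi[where 'p='p, of F] by blast
  qed
  have "(pi_mod F :: ('v, 'p mod_ring) mpoly) \<in> red_ideal \<sigma> I" unfolding red_ideal_def using piI Gs_def by simp
  then show ?thesis using nz ks by blast
qed

lemma combinatorial:
  fixes Ip :: "('v::finite, 'k::field) mpoly set" and Gt :: "('v, rat) mpoly set"
  assumes tot: "term_order \<tau>"
    and rt: "is_reduced_GB \<tau> I Gt"
    and T: "sorted_wrt (strict_of \<tau>) T" "set T = lterm \<tau> ` Gt"
    and S: "sorted_wrt (strict_of \<tau>) S" "set S = MinLT \<tau> Ip"
    and K: "\<And>g. g \<in> Gt \<Longrightarrow> \<exists>f\<in>Ip. f \<noteq> 0 \<and> Poly_Mapping.keys f \<subseteq> Poly_Mapping.keys g"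
    and prec: "tuple_prec \<tau> T S"
  shows False
proof -
  have "\<exists>k. k < length T \<and> (\<forall>i<k. i < length S \<and> S ! i = T ! i) \<and>
      (k < length S \<longrightarrow> strict_of \<tau> (T ! k) (S ! k))"
    using prec unfolding tuple_prec_def
  proof
    assume a: "length S < length T \<and> take (length S) T = S"
    have "\<forall>i<length S. S ! i = T ! i" using a by (metis nth_take)
    then show ?thesis using a by (intro exI[of _ "length S"]) auto
  next
    assume "\<exists>k<min (length S) (length T). take k S = take k T \<and> strict_of \<tau> (T ! k) (S ! k)"
    then obtain k where k: "k < length S" "k < length T" "take k S = take k T" "strict_of \<tau> (T ! k) (S ! k)"
      by auto
    have "\<forall>i<k. S ! i = T ! i" using k(3) by (metis nth_take)
    then show ?thesis using k by (intro exI[of _ k]) auto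
  qed
  then obtain k where k: "k < length T" "\<And>i. i < k \<Longrightarrow> i < length S \<and> S ! i = T ! i"
      "k < length S \<Longrightarrow> strict_of \<tau> (T ! k) (S ! k)" by blast
  have "T ! k \<in> lterm \<tau> ` Gt" using T(2) k(1) nth_mem by metis
  then obtain g where g: "g \<in> Gt" "lterm \<tau> g = T ! k" by (metis imageE)
  have rtp: "is_GB \<tau> I Gt" "\<forall>g\<in>Gt. \<forall>g'\<in>Gt. g \<noteq> g' \<longrightarrow> (\<forall>t\<in>Poly_Mapping.keys g'. \<not> pp_dvd (lterm \<tau> g) t)"
    using rt unfolding is_reduced_GB_def by blast+
  have gnz: "g \<noteq> 0" using rtp(1) g(1) unfolding is_GB_def by blast
  obtain f where f: "f \<in> Ip" "f \<noteq> 0" "Poly_Mapping.keys f \<subseteq> Poly_Mapping.keys g" using K[OF g(1)] by blast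
  define u where "u = lterm \<tau> f"
  have ug: "u \<in> Poly_Mapping.keys g" unfolding u_def using lterm_props(1)[OF tot f(2)] f(3) by blast
  have ut: "\<tau> u (T ! k)" using lterm_props(2)[OF tot gnz ug] g(2) by simp
  have "u \<in> LTS \<tau> Ip" unfolding u_def LTS_def using f(1,2) by blast
  then obtain m where m: "m \<in> MinLT \<tau> Ip" "pp_dvd m u" using MinLT_below[OF tot] by blast
  then obtain j where j: "j < length S" "S ! j = m" using S(2) by (metis in_set_conv_nth)
  show False
  proof (cases "j < k")
    case True
    then have Sj: "S ! j = T ! j" using k(2) by blast
    have "T ! j \<in> lterm \<tau> ` Gt" using T(2) True k(1) nth_mem by (metis less_trans)
    then obtain g' where g': "g' \<in> Gt" "lterm \<tau> g' = T ! j" by (metis imageE)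
    have "strict_of \<tau> (T ! j) (T ! k)" using sorted_wrt_nth_less[OF T(1) True k(1)] .
    then have "g' \<noteq> g" using g(2) g'(2) strict_irrefl by metis
    then have "\<not> pp_dvd (lterm \<tau> g') u" using rtp(2) g'(1) g(1) ug by blast
    then show False using g'(2) Sj j(2) m(2) by simp
  next
    case False
    then have kS: "k < length S" using j(1) by simp
    have "\<tau> (S ! k) (S ! j)"
    proof (cases "k = j")
      case True then show ?thesis using to_refl[OF tot] by simp
    next
      case False
      then have "k < j" using \<open>\<not> j < k\<close> by simp
      then show ?thesis using sorted_wrt_nth_less[OF S(1) _ j(1)] unfolding strict_of_def by blast
    qed
    moreover have "\<tau> m u" using to_dvd[OF tot m(2)] .
    ultimately have "\<tau> (S ! k) (T ! k)" using j(2) ut to_trans[OF tot] by metis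
    then show False using k(3)[OF kS] strict_not[OF tot] by blast
  qed
qed



theorem corollary4p14:
  fixes \<sigma> \<tau> :: "'v::finite pp \<Rightarrow> 'v pp \<Rightarrow> bool"
    and I :: "('v, rat) mpoly set"
  assumes "term_order \<sigma>" and "term_order \<tau>"
    and "is_ideal I" and "I \<noteq> {0}"
    and "good \<sigma> I CARD('p::prime_card)" and "good \<sigma> I CARD('q::prime_card)"
    and "tuple_prec \<tau>
           (O_tuple \<tau> (red_ideal \<sigma> I :: ('v, 'q mod_ring) mpoly set))
           (O_tuple \<tau> (red_ideal \<sigma> I :: ('v, 'p mod_ring) mpoly set))"
  shows "\<not> good \<tau> I CARD('q)"
proof
  assume gq: "good \<tau> I CARD('q)"
  let ?Iq = "red_ideal \<sigma> I :: ('v, 'q mod_ring) mpoly set"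
  let ?Ip = "red_ideal \<sigma> I :: ('v, 'p mod_ring) mpoly set"
  have idq: "is_ideal ?Iq" unfolding red_ideal_def by (rule ideal_gen_ideal)
  have idp: "is_ideal ?Ip" unfolding red_ideal_def by (rule ideal_gen_ideal)
  have Oq: "sorted_wrt (strict_of \<tau>) (O_tuple \<tau> ?Iq)" "set (O_tuple \<tau> ?Iq) = MinLT \<tau> ?Iq"
    using O_tuple_props[OF assms(2) idq] by blast+
  have mq: "MinLT \<tau> ?Iq = lterm \<tau> ` reduced_GB \<tau> I"
    using Q_side[OF assms(1,2,3,6) gq] .
  have Op: "sorted_wrt (strict_of \<tau>) (O_tuple \<tau> ?Ip)" "set (O_tuple \<tau> ?Ip) = MinLT \<tau> ?Ip"
    using O_tuple_props[OF assms(2) idp] by blast+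
  have rt: "is_reduced_GB \<tau> I (reduced_GB \<tau> I)" using reduced_GB_props[OF assms(2,3)] .
  have K: "\<And>g. g \<in> reduced_GB \<tau> I \<Longrightarrow> \<exists>f\<in>?Ip. f \<noteq> 0 \<and> Poly_Mapping.keys f \<subseteq> Poly_Mapping.keys g"
    using P_side[OF assms(1,2,3,5)] by blast
  show False
    using combinatorial[OF assms(2) rt Oq(1) _ Op(1) Op(2) K assms(7)] Oq(2) mq by simp
qed


end
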